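(* Let $\Sigma$ be a non-empty finite or countably infinite alphabet and let $\nu$ be a shift-invariant probability measure on the full shift $(\Sigma^\omega,s)$ such that there exists at least one $\alpha\in\Sigma^\omega$ generic for $\nu$. Then every finite-state selector preserves genericity for $\nu$ (i.e. for every DFA $A$ over $\Sigma$ and every $\alpha$ generic for $\nu$, if $A[\alpha]$ is infinite then $A[\alpha]$ is generic for $\nu$) if and only if $\nu$ is a Bernoulli measure for which every word in $\Sigma^*$ is admissible.
   Context: The shift is $s(a_1a_2\cdots)=a_2a_3\cdots$; cylinders $[w]=\{w\beta:\beta\in\Sigma^\omega\}$ generate the $\sigma$-algebra; $\nu$ is shift-invariant if $\nu(s^{-1}(E))=\nu(E)$ for all measurable $E$. $\nu$ is a Bernoulli measure if there is $p:\Sigma\to[0,1]$ with $\sum_ap(a)=1$ and $\nu([a_1\cdots a_n])=\prod_ip(a_i)$. A word $w$ is admissible for $\nu$ if $\nu([w])>0$. $\alpha\in\Sigma^\omega$ is generic for $\nu$ if for every admissible $w$, $\lim_N\#_w(\alpha|_{\le N})/N=\nu([w])$, where $\#_w(v)$ counts occurrences of $w$ as a contiguous block in $v$ and $\alpha|_{\le N}$ is the length-$N$ prefix. A DFA $A=(Q,\Sigma,\delta,q_s,F)$ has finitely many states and total $\delta$; $A[\alpha]$ is the subsequence of those $\alpha_i$ with $\delta^*(q_s,\alpha_1\cdots\alpha_{i-1})\in F$. *)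

theory Defs
  imports "HOL-Probability.Probability" "HOL-Library.Infinite_Set"
begin

text \<open>Infinite words over an alphabet 'a are functions nat => 'a (alpha 0 is the first letter).\<close>

definition cyl :: "'a list \<Rightarrow> (nat \<Rightarrow> 'a) set" where
  "cyl w = {\<beta>. \<forall>i<length w. \<beta> i = w ! i}"

definition shift :: "(nat \<Rightarrow> 'a) \<Rightarrow> (nat \<Rightarrow> 'a)" where
  "shift \<alpha> = (\<lambda>i. \<alpha> (Suc i))"

definition cylinder_measure :: "(nat \<Rightarrow> 'a) measure \<Rightarrow> bool" where
  "cylinder_measure \<nu> \<longleftrightarrow> space \<nu> = UNIV \<and> sets \<nu> = sigma_sets UNIV (range cyl)"

definition shift_invariant :: "(nat \<Rightarrow> 'a) measure \<Rightarrow> bool" where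
  "shift_invariant \<nu> \<longleftrightarrow> (\<forall>E\<in>sets \<nu>. emeasure \<nu> (shift -` E) = emeasure \<nu> E)"

definition bernoulli_measure :: "(nat \<Rightarrow> 'a) measure \<Rightarrow> bool" where
  "bernoulli_measure \<nu> \<longleftrightarrow> (\<exists>p :: 'a \<Rightarrow> real. (\<forall>a. 0 \<le> p a \<and> p a \<le> 1) \<and> (p has_sum 1) UNIV \<and>
      (\<forall>w. measure \<nu> (cyl w) = prod_list (map p w)))"

definition admissible :: "(nat \<Rightarrow> 'a) measure \<Rightarrow> 'a list \<Rightarrow> bool" where
  "admissible \<nu> w \<longleftrightarrow> measure \<nu> (cyl w) > 0"

definition occ :: "'a list \<Rightarrow> 'a list \<Rightarrow> nat" where
  "occ w v = card {i. i + length w \<le> length v \<and> take (length w) (drop i v) = w}"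

definition prefix_of :: "(nat \<Rightarrow> 'a) \<Rightarrow> nat \<Rightarrow> 'a list" where
  "prefix_of \<alpha> N = map \<alpha> [0..<N]"

definition generic :: "(nat \<Rightarrow> 'a) measure \<Rightarrow> (nat \<Rightarrow> 'a) \<Rightarrow> bool" where
  "generic \<nu> \<alpha> \<longleftrightarrow> (\<forall>w. admissible \<nu> w \<longrightarrow>
      ((\<lambda>N. real (occ w (prefix_of \<alpha> N)) / real N) \<longlonglongrightarrow> measure \<nu> (cyl w)))"

text \<open>A DFA with state set Q (a finite set of naturals, w.l.o.g.), total transition
  function delta on Q, start state qs and final states F.\<close>
definition is_dfa :: "nat set \<Rightarrow> (nat \<Rightarrow> 'a \<Rightarrow> nat) \<Rightarrow> nat \<Rightarrow> nat set \<Rightarrow> bool" where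
  "is_dfa Q \<delta> qs F \<longleftrightarrow> finite Q \<and> qs \<in> Q \<and> F \<subseteq> Q \<and> (\<forall>q\<in>Q. \<forall>a. \<delta> q a \<in> Q)"

fun run :: "(nat \<Rightarrow> 'a \<Rightarrow> nat) \<Rightarrow> nat \<Rightarrow> (nat \<Rightarrow> 'a) \<Rightarrow> nat \<Rightarrow> nat" where
  "run \<delta> qs \<alpha> 0 = qs"
| "run \<delta> qs \<alpha> (Suc i) = \<delta> (run \<delta> qs \<alpha> i) (\<alpha> i)"

definition selected :: "(nat \<Rightarrow> 'a \<Rightarrow> nat) \<Rightarrow> nat \<Rightarrow> nat set \<Rightarrow> (nat \<Rightarrow> 'a) \<Rightarrow> nat set" where
  "selected \<delta> qs F \<alpha> = {i. run \<delta> qs \<alpha> i \<in> F}"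

text \<open>A[alpha], meaningful when the selected index set is infinite.\<close>
definition select :: "(nat \<Rightarrow> 'a \<Rightarrow> nat) \<Rightarrow> nat \<Rightarrow> nat set \<Rightarrow> (nat \<Rightarrow> 'a) \<Rightarrow> (nat \<Rightarrow> 'a)" where
  "select \<delta> qs F \<alpha> = \<alpha> \<circ> enumerate (selected \<delta> qs F \<alpha>)"

end

theory Submission
  imports Defs "HOL-Library.Nat_Bijection" "HOL-Real_Asymp.Real_Asymp"
begin

definition win :: "(nat \<Rightarrow> 'a) \<Rightarrow> nat \<Rightarrow> nat \<Rightarrow> 'a list" where
  "win \<alpha> i n = map \<alpha> [i..<i+n]"

lemma length_win[simp]: "length (win \<alpha> i n) = n"
  by (simp add: win_def)

lemma win_Suc: "win \<alpha> i (Suc n) = \<alpha> i # win \<alpha> (Suc i) n"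
  by (simp add: win_def upt_conv_Cons del: upt_Suc)

lemma win_0[simp]: "win \<alpha> i 0 = []"
  by (simp add: win_def)

lemma win_Suc_snoc: "win \<alpha> i (Suc n) = win \<alpha> i n @ [\<alpha> (i+n)]"
  by (simp add: win_def)

lemma occ_prefix: "occ w (prefix_of \<alpha> N) = card {i. i + length w \<le> N \<and> win \<alpha> i (length w) = w}"
  unfolding occ_def prefix_of_def win_def
  by (intro arg_cong[where f=card]) (auto simp: take_map drop_map take_upt)

fun runs :: "('s \<Rightarrow> 'a \<Rightarrow> 's) \<Rightarrow> 's \<Rightarrow> (nat \<Rightarrow> 'a) \<Rightarrow> nat \<Rightarrow> 's" where
  "runs \<delta> q \<alpha> 0 = q"
| "runs \<delta> q \<alpha> (Suc i) = \<delta> (runs \<delta> q \<alpha> i) (\<alpha> i)"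

lemma run_runs: "run \<delta> q \<alpha> t = runs \<delta> q \<alpha> t"
  by (induct t) auto

lemma runs_add: "runs \<delta> q \<alpha> (t + j) = foldl \<delta> (runs \<delta> q \<alpha> t) (win \<alpha> t j)"
  by (induct j) (auto simp: win_Suc_snoc)

lemma runs_in: "q \<in> Q \<Longrightarrow> (\<forall>s\<in>Q. \<forall>a. \<delta> s a \<in> Q) \<Longrightarrow> runs \<delta> q \<alpha> t \<in> Q"
  by (induct t) auto

lemma foldl_in: "q \<in> Q \<Longrightarrow> (\<forall>s\<in>Q. \<forall>a. \<delta> s a \<in> Q) \<Longrightarrow> foldl \<delta> q w \<in> Q"
  by (induct w arbitrary: q) auto

definition cntP :: "(nat \<Rightarrow> bool) \<Rightarrow> nat \<Rightarrow> nat" where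
  "cntP P N = card {t. t < N \<and> P t}"

lemma cntP_0[simp]: "cntP P 0 = 0"
  by (simp add: cntP_def)

lemma cntP_Suc: "cntP P (Suc N) = cntP P N + (if P N then 1 else 0)"
proof -
  have "{t. t < Suc N \<and> P t} = {t. t < N \<and> P t} \<union> (if P N then {N} else {})"
    by (auto simp: less_Suc_eq)
  then show ?thesis unfolding cntP_def by (auto simp: card_insert_if)
qed

lemma cntP_mono: "M \<le> N \<Longrightarrow> cntP P M \<le> cntP P N"
  unfolding cntP_def by (intro card_mono) auto

lemma cntP_le: "cntP P N \<le> N"
proof -
  have "cntP P N \<le> card {..<N}" unfolding cntP_def by (intro card_mono) auto
  then show ?thesis by simp
qed

lemma cntP_enum:
  assumes S: "infinite S"
  shows "cntP (\<lambda>t. t \<in> S) (enumerate S m) = m"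
proof -
  have "{t. t < enumerate S m \<and> t \<in> S} = enumerate S ` {..<m}"
  proof
    show "{t. t < enumerate S m \<and> t \<in> S} \<subseteq> enumerate S ` {..<m}"
    proof
      fix t assume "t \<in> {t. t < enumerate S m \<and> t \<in> S}"
      then have t: "t < enumerate S m" "t \<in> S" by auto
      obtain k where k: "enumerate S k = t" using enumerate_Ex[OF S t(2)] by blast
      then have "k < m" using t(1) S enumerate_mono_iff[OF S, of k m] by simp
      then show "t \<in> enumerate S ` {..<m}" using k by auto
    qed
    show "enumerate S ` {..<m} \<subseteq> {t. t < enumerate S m \<and> t \<in> S}"
      using S by (auto simp: enumerate_in_set)
  qed
  moreover have "inj (enumerate S)"
    using S by (simp add: inj_enumerate)
  ultimately show ?thesis unfolding cntP_def
    by (simp add: card_image inj_on_subset[of _ UNIV])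
qed

lemma enum_cntP:
  assumes S: "infinite S" and t: "t \<in> S"
  shows "enumerate S (cntP (\<lambda>t. t \<in> S) t) = t"
proof -
  obtain k where k: "enumerate S k = t" using enumerate_Ex[OF S t] by blast
  then show ?thesis using cntP_enum[OF S, of k] by simp
qed

lemma cntP_enum_less:
  assumes S: "infinite S"
  shows "enumerate S m < N \<longleftrightarrow> m < cntP (\<lambda>t. t \<in> S) N"
proof
  assume "enumerate S m < N"
  then have "cntP (\<lambda>t. t \<in> S) (Suc (enumerate S m)) \<le> cntP (\<lambda>t. t \<in> S) N"
    by (intro cntP_mono) simp
  then show "m < cntP (\<lambda>t. t \<in> S) N"
    using cntP_enum[OF S, of m] enumerate_in_set[OF S, of m] by (simp add: cntP_Suc)
next
  assume m: "m < cntP (\<lambda>t. t \<in> S) N"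
  show "enumerate S m < N"
  proof (rule ccontr)
    assume "\<not> enumerate S m < N"
    then have "cntP (\<lambda>t. t \<in> S) N \<le> cntP (\<lambda>t. t \<in> S) (enumerate S m)"
      by (intro cntP_mono) simp
    then show False using m cntP_enum[OF S, of m] by simp
  qed
qed

lemma card_sel_transfer:
  assumes S: "infinite S"
  shows "card {t. t < N \<and> t \<in> S \<and> R (cntP (\<lambda>t. t \<in> S) t) (\<alpha> t)}
       = card {m. m < cntP (\<lambda>t. t \<in> S) N \<and> R m ((\<alpha> \<circ> enumerate S) m)}"
proof -
  have "{t. t < N \<and> t \<in> S \<and> R (cntP (\<lambda>t. t \<in> S) t) (\<alpha> t)}
      = enumerate S ` {m. m < cntP (\<lambda>t. t \<in> S) N \<and> R m ((\<alpha> \<circ> enumerate S) m)}"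
  proof
    show "{t. t < N \<and> t \<in> S \<and> R (cntP (\<lambda>t. t \<in> S) t) (\<alpha> t)}
      \<subseteq> enumerate S ` {m. m < cntP (\<lambda>t. t \<in> S) N \<and> R m ((\<alpha> \<circ> enumerate S) m)}"
    proof
      fix t assume "t \<in> {t. t < N \<and> t \<in> S \<and> R (cntP (\<lambda>t. t \<in> S) t) (\<alpha> t)}"
      then have t: "t < N" "t \<in> S" "R (cntP (\<lambda>t. t \<in> S) t) (\<alpha> t)" by auto
      have e: "enumerate S (cntP (\<lambda>t. t \<in> S) t) = t" using enum_cntP[OF S t(2)] .
      have "cntP (\<lambda>t. t \<in> S) t < cntP (\<lambda>t. t \<in> S) N"
        using cntP_enum_less[OF S] e t(1) by metis
      then show "t \<in> enumerate S ` {m. m < cntP (\<lambda>t. t \<in> S) N \<and> R m ((\<alpha> \<circ> enumerate S) m)}"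
        using e t(3) by (intro image_eqI[of _ _ "cntP (\<lambda>t. t \<in> S) t"]) auto
    qed
    show "enumerate S ` {m. m < cntP (\<lambda>t. t \<in> S) N \<and> R m ((\<alpha> \<circ> enumerate S) m)}
      \<subseteq> {t. t < N \<and> t \<in> S \<and> R (cntP (\<lambda>t. t \<in> S) t) (\<alpha> t)}"
      using S cntP_enum_less[OF S] by (auto simp: enumerate_in_set cntP_enum)
  qed
  moreover have "inj (enumerate S)"
    using S by (simp add: inj_enumerate)
  ultimately show ?thesis
    by (simp add: card_image inj_on_subset[of _ UNIV])
qed

lemma cntP_tendsto:
  assumes S: "infinite S"
  shows "filterlim (cntP (\<lambda>t. t \<in> S)) at_top sequentially"
proof (subst filterlim_at_top, intro allI)
  fix K
  show "eventually (\<lambda>N. K \<le> cntP (\<lambda>t. t \<in> S) N) sequentially"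
  proof (rule eventually_sequentiallyI[of "Suc (enumerate S K)"])
    fix N assume "Suc (enumerate S K) \<le> N"
    then have "enumerate S K < N" by simp
    then show "K \<le> cntP (\<lambda>t. t \<in> S) N" using cntP_enum_less[OF S] by simp
  qed
qed

definition Jset :: "'a list \<Rightarrow> 'a list \<Rightarrow> nat set" where
  "Jset u v = {j. j \<le> length u \<and> j \<le> length v \<and> drop (length v - j) v = take j u}"

definition jstep :: "'a list \<Rightarrow> nat set \<Rightarrow> 'a \<Rightarrow> nat set" where
  "jstep u J x = insert 0 (Suc ` {j\<in>J. j < length u \<and> u ! j = x})"

lemma Jset_Nil: "Jset u [] = {0}"
  by (auto simp: Jset_def)

lemma Jset_snoc: "Jset u (v @ [x]) = jstep u (Jset u v) x"
proof (intro set_eqI iffI)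
  fix j assume "j \<in> Jset u (v @ [x])"
  then have j: "j \<le> length u" "j \<le> Suc (length v)"
    "drop (Suc (length v) - j) (v @ [x]) = take j u" by (auto simp: Jset_def)
  show "j \<in> jstep u (Jset u v) x"
  proof (cases j)
    case 0 then show ?thesis by (simp add: jstep_def)
  next
    case (Suc k)
    have kl: "k < length u" using j Suc by simp
    have "drop (length v - k) v @ [x] = take k u @ [u ! k]"
      using j(3) Suc j(2) kl by (simp add: take_Suc_conv_app_nth Suc_diff_le)
    then have "drop (length v - k) v = take k u" "u ! k = x" by auto
    then have "k \<in> Jset u v" using j Suc by (auto simp: Jset_def)
    then show ?thesis using Suc kl \<open>u ! k = x\<close> by (auto simp: jstep_def)
  qed
next
  fix j assume "j \<in> jstep u (Jset u v) x"
  then consider "j = 0" | k where "j = Suc k" "k \<in> Jset u v" "k < length u" "u ! k = x"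
    by (auto simp: jstep_def)
  then show "j \<in> Jset u (v @ [x])"
  proof cases
    case 1 then show ?thesis by (simp add: Jset_def)
  next
    case 2
    then have k: "k \<le> length v" "drop (length v - k) v = take k u" by (auto simp: Jset_def)
    have "drop (Suc (length v) - Suc k) (v @ [x]) = take (Suc k) u"
      using k 2 by (simp add: take_Suc_conv_app_nth)
    then show ?thesis using 2 k by (auto simp: Jset_def)
  qed
qed

lemma Jset_sub: "Jset u v \<subseteq> {0..length u}"
  by (auto simp: Jset_def)

lemma jstep_sub: "jstep u J x \<subseteq> {0..length u}"
  by (auto simp: jstep_def)

lemma len_in_Jset_prefix:
  "length u \<in> Jset u (prefix_of \<beta> m) \<longleftrightarrow> length u \<le> m \<and> win \<beta> (m - length u) (length u) = u"
proof -
  have "length u \<le> m \<Longrightarrow> drop (m - length u) (map \<beta> [0..<m]) = win \<beta> (m - length u) (length u)"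
    by (simp add: win_def drop_map)
  then show ?thesis by (auto simp: Jset_def prefix_of_def)
qed

lemma prefix_of_Suc: "prefix_of \<beta> (Suc m) = prefix_of \<beta> m @ [\<beta> m]"
  by (simp add: prefix_of_def)

lemma count_suffix_le:
  "card {m. m < M \<and> length u \<in> Jset u (prefix_of \<beta> m)} \<le> occ u (prefix_of \<beta> M)"
  "occ u (prefix_of \<beta> M) \<le> card {m. m < M \<and> length u \<in> Jset u (prefix_of \<beta> m)} + 1"
proof -
  let ?A = "{m. m < M \<and> length u \<in> Jset u (prefix_of \<beta> m)}"
  let ?B = "{i. i + length u \<le> M \<and> win \<beta> i (length u) = u}"
  have AB: "?A = (\<lambda>i. i + length u) ` {i. i + length u < M \<and> win \<beta> i (length u) = u}"
  proof (intro set_eqI iffI)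
    fix m assume "m \<in> ?A"
    then show "m \<in> (\<lambda>i. i + length u) ` {i. i + length u < M \<and> win \<beta> i (length u) = u}"
      by (intro image_eqI[of _ _ "m - length u"]) (auto simp: len_in_Jset_prefix)
  qed (auto simp: len_in_Jset_prefix)
  have fB: "finite ?B" by (rule finite_subset[of _ "{..M}"]) auto
  have cA: "card ?A = card {i. i + length u < M \<and> win \<beta> i (length u) = u}"
    unfolding AB by (intro card_image) (auto simp: inj_on_def)
  have "card {i. i + length u < M \<and> win \<beta> i (length u) = u} \<le> card ?B"
    by (intro card_mono fB) auto
  then show "card ?A \<le> occ u (prefix_of \<beta> M)" using cA by (simp add: occ_prefix)
  have "?B \<subseteq> insert (M - length u) {i. i + length u < M \<and> win \<beta> i (length u) = u}"
    by auto
  then have "card ?B \<le> card (insert (M - length u) {i. i + length u < M \<and> win \<beta> i (length u) = u})"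
    by (intro card_mono) (auto intro: finite_subset[of _ "{..M}"])
  also have "\<dots> \<le> card {i. i + length u < M \<and> win \<beta> i (length u) = u} + 1"
    by (simp add: card_insert_le_m1 card_insert_if)
  finally show "occ u (prefix_of \<beta> M) \<le> card ?A + 1" using cA by (simp add: occ_prefix)
qed

lemma count_suffix_snoc:
  "card {m. m < M \<and> length u \<in> Jset u (prefix_of \<beta> m) \<and> \<beta> m = x} = occ (u @ [x]) (prefix_of \<beta> M)"
proof -
  let ?A = "{m. m < M \<and> length u \<in> Jset u (prefix_of \<beta> m) \<and> \<beta> m = x}"
  have AB: "?A = (\<lambda>i. i + length u) ` {i. i + length (u@[x]) \<le> M \<and> win \<beta> i (length (u@[x])) = u@[x]}"
  proof (intro set_eqI iffI)
    fix m assume "m \<in> ?A"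
    then show "m \<in> (\<lambda>i. i + length u) ` {i. i + length (u@[x]) \<le> M \<and> win \<beta> i (length (u@[x])) = u@[x]}"
      by (intro image_eqI[of _ _ "m - length u"]) (auto simp: len_in_Jset_prefix win_Suc_snoc)
  qed (auto simp: len_in_Jset_prefix win_Suc_snoc)
  show ?thesis unfolding occ_prefix AB
    by (intro card_image) (auto simp: inj_on_def)
qed

lemma sum_prod_listset:
  fixes f :: "'a \<Rightarrow> real"
  assumes "\<forall>A\<in>set As. finite A"
  shows "(\<Sum>w\<in>{w. list_all2 (\<in>) w As}. prod_list (map f w)) = prod_list (map (sum f) As)"
  using assms
proof (induct As)
  case Nil
  have "{w. list_all2 (\<in>) w []} = {[]}" by auto
  then show ?case by simp
next
  case (Cons A As)
  have eq: "{w. list_all2 (\<in>) w (A # As)} = (\<lambda>(a, w). a # w) ` (A \<times> {w. list_all2 (\<in>) w As})"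
    by (auto simp: list_all2_Cons2)
  have inj: "inj_on (\<lambda>(a, w). a # w) (A \<times> {w. list_all2 (\<in>) w As})"
    by (auto simp: inj_on_def)
  have "(\<Sum>w\<in>{w. list_all2 (\<in>) w (A # As)}. prod_list (map f w))
      = (\<Sum>(a, w)\<in>A \<times> {w. list_all2 (\<in>) w As}. f a * prod_list (map f w))"
    unfolding eq sum.reindex[OF inj] by (simp add: case_prod_beta)
  also have "\<dots> = (\<Sum>a\<in>A. \<Sum>w\<in>{w. list_all2 (\<in>) w As}. f a * prod_list (map f w))"
    by (simp only: sum.cartesian_product case_prod_beta)
  also have "\<dots> = sum f A * (\<Sum>w\<in>{w. list_all2 (\<in>) w As}. prod_list (map f w))"
    by (simp only: sum_product)
  also have "\<dots> = prod_list (map (sum f) (A # As))"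
    using Cons by simp
  finally show ?case .
qed

lemma prod_list_nonneg_le1:
  fixes b :: "'c \<Rightarrow> real"
  assumes "\<forall>c\<in>set C. 0 \<le> b c \<and> b c \<le> 1"
  shows "0 \<le> prod_list (map b C) \<and> prod_list (map b C) \<le> 1"
  using assms by (induct C) (auto intro: mult_le_one)

lemma prod_list_approx:
  fixes a b :: "'c \<Rightarrow> real" and d :: real
  assumes "\<forall>c\<in>set C. 0 \<le> a c \<and> a c \<le> b c \<and> b c \<le> 1 \<and> b c - a c \<le> d"
  shows "prod_list (map a C) \<le> prod_list (map b C) \<and>
         prod_list (map b C) - prod_list (map a C) \<le> real (length C) * d"
  using assms
proof (induct C)
  case Nil then show ?case by simp
next
  case (Cons c C)
  let ?A = "prod_list (map a C)" and ?B = "prod_list (map b C)"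
  have IH: "?A \<le> ?B" "?B - ?A \<le> length C * d" using Cons by auto
  have A01: "0 \<le> ?A \<and> ?A \<le> 1" using prod_list_nonneg_le1[of C a] Cons.prems by force
  have c: "0 \<le> a c" "a c \<le> b c" "b c \<le> 1" "b c - a c \<le> d" using Cons.prems by auto
  have "a c * ?A \<le> b c * ?B" using c IH A01 by (intro mult_mono) auto
  moreover have "b c * ?B - a c * ?A = b c * (?B - ?A) + (b c - a c) * ?A"
    by (simp add: algebra_simps)
  moreover have "b c * (?B - ?A) \<le> ?B - ?A" using c IH by (intro mult_left_le_one_le) auto
  moreover have "(b c - a c) * ?A \<le> d" using c A01
    by (metis diff_ge_0_iff_ge mult_left_le mult_right_mono order_trans)
  ultimately show ?case using IH by (simp add: algebra_simps)
qed

lemma double_count: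
  fixes X :: "nat \<Rightarrow> real"
  assumes X: "\<And>t. \<bar>X t\<bar> \<le> 1"
  shows "\<bar>real n * (\<Sum>t<N. X t) - (\<Sum>i<N. \<Sum>j<n. X (i + j))\<bar> \<le> 2 * real n * real n"
proof -
  have interval: "\<bar>\<Sum>t\<in>{a..<a+k}. X t\<bar> \<le> real k" for a k
  proof -
    have "\<bar>\<Sum>t\<in>{a..<a+k}. X t\<bar> \<le> (\<Sum>t\<in>{a..<a+k}. \<bar>X t\<bar>)" by (rule sum_abs)
    also have "\<dots> \<le> (\<Sum>t\<in>{a..<a+k}. 1)" by (intro sum_mono X)
    finally show ?thesis by simp
  qed
  have one: "\<bar>(\<Sum>t<N. X t) - (\<Sum>i<N. X (i + j))\<bar> \<le> 2 * real j" for j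
  proof -
    have e1: "(\<Sum>i<N. X (i + j)) = (\<Sum>t\<in>{j..<j+N}. X t)"
      by (rule sum.reindex_bij_witness[of _ "\<lambda>t. t - j" "\<lambda>i. i + j"]) auto
    have e2: "(\<Sum>t<N+j. X t) = (\<Sum>t<N. X t) + (\<Sum>t\<in>{N..<N+j}. X t)"
      by (simp add: sum.atLeastLessThan_concat[symmetric] lessThan_atLeast0 add.commute)
    have e3: "(\<Sum>t<N+j. X t) = (\<Sum>t<j. X t) + (\<Sum>t\<in>{j..<j+N}. X t)"
      by (simp add: sum.atLeastLessThan_concat[symmetric] lessThan_atLeast0 add.commute)
    have "\<bar>\<Sum>t<j. X t\<bar> \<le> real j" using interval[of 0 j] by (simp add: lessThan_atLeast0)
    then show ?thesis using e1 e2 e3 interval[of N j] by linarith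
  qed
  have "(\<Sum>i<N. \<Sum>j<n. X (i + j)) = (\<Sum>j<n. \<Sum>i<N. X (i + j))" by (rule sum.swap)
  then have "real n * (\<Sum>t<N. X t) - (\<Sum>i<N. \<Sum>j<n. X (i + j))
      = (\<Sum>j<n. (\<Sum>t<N. X t) - (\<Sum>i<N. X (i + j)))"
    by (simp add: sum_subtractf)
  also have "\<bar>\<dots>\<bar> \<le> (\<Sum>j<n. \<bar>(\<Sum>t<N. X t) - (\<Sum>i<N. X (i + j))\<bar>)" by (rule sum_abs)
  also have "\<dots> \<le> (\<Sum>j<n. 2 * real n)"
    by (intro sum_mono order_trans[OF one]) auto
  finally show ?thesis by simp
qed

locale clset =
  fixes p :: "'a \<Rightarrow> real" and \<alpha> :: "nat \<Rightarrow> 'a" and Q :: "'s set"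
    and \<delta> :: "'s \<Rightarrow> 'a \<Rightarrow> 's" and q0 :: 's and F :: "'s set" and x :: 'a
  assumes p_pos: "\<And>a. 0 < p a" and p_sum: "(p has_sum 1) UNIV"
    and gen: "\<And>w. (\<lambda>N. real (occ w (prefix_of \<alpha> N)) / real N) \<longlonglongrightarrow> prod_list (map p w)"
    and finQ: "finite Q" and q0Q: "q0 \<in> Q" and \<delta>Q: "\<And>s a. s \<in> Q \<Longrightarrow> \<delta> s a \<in> Q"
begin

definition kap :: "'a \<Rightarrow> ('s \<Rightarrow> 's) \<times> bool" where
  "kap b = (restrict (\<lambda>q. \<delta> q b) Q, b = x)"
definition Gam where "Gam = range kap"
definition pt where "pt c = infsum p (kap -` {c})"
definition T :: "'s \<Rightarrow> bool \<Rightarrow> real" where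
  "T s e = (if s \<in> F then (if e then 1 else 0) - p x else 0)"

fun G :: "'s \<Rightarrow> (('s \<Rightarrow> 's) \<times> bool) list \<Rightarrow> real" where
  "G s [] = 0"
| "G s (c # C) = T s (snd c) + G (fst c s) C"

primrec Ex :: "nat \<Rightarrow> ((('s \<Rightarrow> 's) \<times> bool) list \<Rightarrow> real) \<Rightarrow> real" where
  "Ex 0 f = f []"
| "Ex (Suc n) f = (\<Sum>c\<in>Gam. pt c * Ex n (\<lambda>C. f (c # C)))"

definition LN where "LN n = {C. set C \<subseteq> Gam \<and> length C = n}"
definition PC where "PC C = prod_list (map pt C)"

lemma finite_Gam: "finite Gam"
proof -
  have "Gam \<subseteq> (Q \<rightarrow>\<^sub>E Q) \<times> UNIV"
    by (auto simp: Gam_def kap_def \<delta>Q)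
  moreover have "finite ((Q \<rightarrow>\<^sub>E Q) \<times> (UNIV :: bool set))"
    using finQ by (intro finite_cartesian_product finite_PiE) auto
  ultimately show ?thesis by (rule finite_subset)
qed

lemma finite_LN: "finite (LN n)"
  unfolding LN_def using finite_Gam by (rule finite_lists_length_eq)

lemma summ: "p summable_on A"
  using p_sum summable_on_subset[of p UNIV A] by (auto simp: summable_on_def)

lemma pt_nonneg: "0 \<le> pt c"
  unfolding pt_def by (rule infsum_nonneg) (simp add: less_imp_le p_pos)

lemma infsum_p_UNIV: "infsum p UNIV = 1"
  using p_sum by (rule infsumI)

lemma infsum_p_le1: "infsum p A \<le> 1"
proof -
  have "infsum p A \<le> infsum p UNIV"
    by (rule infsum_mono_neutral) (auto simp: summ less_imp_le p_pos)
  then show ?thesis using infsum_p_UNIV by simp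
qed

lemma pt_le1: "pt c \<le> 1"
  unfolding pt_def by (rule infsum_p_le1)

lemma px_le1: "p x \<le> 1"
proof -
  have "sum p {x} \<le> 1"
    by (rule finite_sum_le_has_sum[OF p_sum]) (auto simp: less_imp_le p_pos)
  then show ?thesis by simp
qed

lemma infsum_preimage: "finite A \<Longrightarrow> infsum p (kap -` A) = (\<Sum>c\<in>A. pt c)"
proof (induct A rule: finite_induct)
  case empty then show ?case by simp
next
  case (insert c A)
  have "kap -` insert c A = kap -` {c} \<union> kap -` A" by auto
  moreover have "kap -` {c} \<inter> kap -` A = {}" using insert by auto
  ultimately have "infsum p (kap -` insert c A) = infsum p (kap -` {c}) + infsum p (kap -` A)"
    by (simp add: infsum_Un_disjoint summ)
  then show ?case using insert by (simp add: pt_def)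
qed

lemma sum_pt: "(\<Sum>c\<in>Gam. pt c) = 1"
proof -
  have "kap -` Gam = UNIV" by (auto simp: Gam_def)
  then show ?thesis using infsum_preimage[OF finite_Gam] infsum_p_UNIV by simp
qed

lemma kap_x: "kap b = kap x \<longleftrightarrow> b = x"
  by (auto simp: kap_def)

lemma pt_snd: "(\<Sum>c\<in>Gam. pt c * (if snd c then 1 else 0)) = p x"
proof -
  have "(\<Sum>c\<in>Gam. pt c * (if snd c then 1 else 0)) = (\<Sum>c\<in>Gam. if c = kap x then pt c else 0)"
    by (intro sum.cong) (auto simp: Gam_def kap_def)
  also have "\<dots> = pt (kap x)"
  proof -
    have "kap x \<in> Gam" by (simp add: Gam_def)
    then have "(\<Sum>c\<in>Gam. if c = kap x then pt c else 0)
       = (if kap x = kap x then pt (kap x) else 0) + (\<Sum>c\<in>Gam - {kap x}. if c = kap x then pt c else 0)"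
      by (rule sum.remove[OF finite_Gam])
    also have "(\<Sum>c\<in>Gam - {kap x}. if c = kap x then pt c else 0) = 0"
      by (rule sum.neutral) auto
    finally show ?thesis by (simp only: simp_thms if_True add_0_right)
  qed
  also have "pt (kap x) = p x"
  proof -
    have e: "kap -` {kap x} = {x}"
    proof (intro set_eqI iffI)
      fix b assume "b \<in> kap -` {kap x}"
      then have "kap b = kap x" by simp
      then show "b \<in> {x}" unfolding kap_x by simp
    qed simp
    have "pt (kap x) = infsum p {x}" unfolding pt_def e ..
    also have "\<dots> = p x" by (subst infsum_finite) auto
    finally show ?thesis .
  qed
  finally show ?thesis .
qed

lemma pt_approx:
  assumes "d > 0"
  shows "\<exists>W. finite W \<and> W \<subseteq> kap -` {c} \<and> pt c - d \<le> sum p W \<and> sum p W \<le> pt c"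
proof -
  have "(p has_sum pt c) (kap -` {c})" unfolding pt_def using summ by (rule has_sum_infsum)
  from has_sum_finite_approximation[OF this assms] obtain W where
    W: "finite W" "W \<subseteq> kap -` {c}" "dist (sum p W) (pt c) \<le> d" by blast
  have "sum p W \<le> pt c" unfolding pt_def
    by (rule finite_sum_le_infsum) (use W summ in \<open>auto simp: less_imp_le p_pos\<close>)
  then show ?thesis using W by (intro exI[of _ W]) (auto simp: dist_real_def)
qed

lemma Ex_sum: "Ex n f = (\<Sum>C\<in>LN n. PC C * f C)"
proof (induct n arbitrary: f)
  case 0
  have "LN 0 = {[]}" by (auto simp: LN_def)
  then show ?case by (simp add: PC_def)
next
  case (Suc n)
  have eq: "LN (Suc n) = (\<lambda>(C, c). c # C) ` (LN n \<times> Gam)"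
    unfolding LN_def by (rule lists_length_Suc_eq)
  have inj: "inj_on (\<lambda>(C, c). c # C) (LN n \<times> Gam)" by (auto simp: inj_on_def)
  have "(\<Sum>C\<in>LN (Suc n). PC C * f C) = (\<Sum>(C, c)\<in>LN n \<times> Gam. pt c * (PC C * f (c # C)))"
    unfolding eq by (subst sum.reindex[OF inj]) (simp add: case_prod_unfold PC_def mult.assoc)
  also have "\<dots> = (\<Sum>C\<in>LN n. \<Sum>c\<in>Gam. pt c * (PC C * f (c # C)))"
    by (rule sum.cartesian_product[symmetric])
  also have "\<dots> = (\<Sum>c\<in>Gam. \<Sum>C\<in>LN n. pt c * (PC C * f (c # C)))"
    by (rule sum.swap)
  also have "\<dots> = Ex (Suc n) f"
    by (simp add: Suc sum_distrib_left)
  finally show ?case by simp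
qed

lemma Ex_const: "Ex n (\<lambda>_. k) = k"
  by (induct n) (simp_all add: sum_distrib_right[symmetric] sum_pt)

lemma Ex_add: "Ex n (\<lambda>C. f C + g C) = Ex n f + Ex n g"
  by (induct n arbitrary: f g) (simp_all add: distrib_left sum.distrib)

lemma Ex_cmult: "Ex n (\<lambda>C. k * f C) = k * Ex n f"
  by (induct n arbitrary: f) (simp_all add: sum_distrib_left mult.left_commute)

lemma Ex_mono: "(\<And>C. f C \<le> g C) \<Longrightarrow> Ex n f \<le> Ex n g"
proof (induct n arbitrary: f g)
  case 0 then show ?case by simp
next
  case (Suc n)
  show ?case using Suc by (simp, intro sum_mono mult_left_mono) (auto simp: pt_nonneg)
qed

lemma sum_PC: "(\<Sum>C\<in>LN n. PC C) = 1"
  using Ex_const[of n 1] by (simp add: Ex_sum)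

lemma PC_nonneg: "0 \<le> PC C"
  unfolding PC_def by (induct C) (auto simp: pt_nonneg)

lemma T_sum: "(\<Sum>c\<in>Gam. pt c * T s (snd c)) = 0"
proof (cases "s \<in> F")
  case True
  have "(\<Sum>c\<in>Gam. pt c * T s (snd c))
      = (\<Sum>c\<in>Gam. pt c * (if snd c then 1 else 0)) - p x * (\<Sum>c\<in>Gam. pt c)"
    using True by (simp add: T_def algebra_simps sum_subtractf sum_distrib_left)
  then show ?thesis by (simp add: pt_snd sum_pt)
qed (simp add: T_def)

lemma T_sq: "(T s e)\<^sup>2 \<le> 1"
  using p_pos[of x] px_le1 by (auto simp: T_def power2_eq_square mult_le_one)

lemma G_mean: "Ex n (G s) = 0"
proof (induct n arbitrary: s)
  case 0 then show ?case by simp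
next
  case (Suc n)
  have "Ex (Suc n) (G s) = (\<Sum>c\<in>Gam. pt c * T s (snd c))"
    by (simp add: Ex_add Ex_const Suc)
  then show ?case by (simp add: T_sum)
qed

lemma G_sq: "Ex n (\<lambda>C. (G s C)\<^sup>2) \<le> real n"
proof (induct n arbitrary: s)
  case 0 then show ?case by simp
next
  case (Suc n)
  have "Ex (Suc n) (\<lambda>C. (G s C)\<^sup>2) = (\<Sum>c\<in>Gam. pt c * Ex n (\<lambda>C. (T s (snd c) + G (fst c s) C)\<^sup>2))"
    by simp
  also have "\<dots> = (\<Sum>c\<in>Gam. pt c * ((T s (snd c))\<^sup>2 + Ex n (\<lambda>C. (G (fst c s) C)\<^sup>2)))"
  proof (intro sum.cong refl arg_cong2[where f="(*)"])
    fix c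
    have "(\<lambda>C. (T s (snd c) + G (fst c s) C)\<^sup>2)
        = (\<lambda>C. (T s (snd c))\<^sup>2 + ((2 * T s (snd c)) * G (fst c s) C + (G (fst c s) C)\<^sup>2))"
      by (simp add: power2_eq_square algebra_simps)
    then show "Ex n (\<lambda>C. (T s (snd c) + G (fst c s) C)\<^sup>2)
        = (T s (snd c))\<^sup>2 + Ex n (\<lambda>C. (G (fst c s) C)\<^sup>2)"
      by (simp add: Ex_add Ex_const Ex_cmult G_mean)
  qed
  also have "\<dots> \<le> (\<Sum>c\<in>Gam. pt c * (1 + real n))"
    by (intro sum_mono mult_left_mono add_mono T_sq Suc) (auto simp: pt_nonneg)
  also have "\<dots> = 1 + real n" by (simp add: sum_distrib_right[symmetric] sum_pt)
  finally show ?case by simp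
qed

lemma abs_le_sq: "lam > 0 \<Longrightarrow> \<bar>g::real\<bar> \<le> lam + g\<^sup>2 / lam"
proof (cases "\<bar>g\<bar> \<le> lam")
  case False
  assume l: "lam > 0"
  then have "\<bar>g\<bar> * lam \<le> \<bar>g\<bar> * \<bar>g\<bar>" using False by (intro mult_left_mono) auto
  then have "\<bar>g\<bar> \<le> g\<^sup>2 / lam" using l by (simp add: field_simps power2_eq_square abs_mult_self_eq)
  then show ?thesis using l by (smt (verit) divide_nonneg_pos zero_le_power2)
next
  case True
  assume "lam > 0"
  then show ?thesis using True by (smt (verit) divide_nonneg_pos zero_le_power2)
qed

lemma G_abs: "lam > 0 \<Longrightarrow> Ex n (\<lambda>C. \<bar>G s C\<bar>) \<le> lam + real n / lam"
proof -
  assume l: "lam > 0"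
  have "Ex n (\<lambda>C. \<bar>G s C\<bar>) \<le> Ex n (\<lambda>C. lam + (1/lam) * (G s C)\<^sup>2)"
    by (intro Ex_mono) (simp add: abs_le_sq[OF l])
  also have "\<dots> = lam + (1/lam) * Ex n (\<lambda>C. (G s C)\<^sup>2)"
    using Ex_cmult[of n "1/lam" "\<lambda>C. (G s C)\<^sup>2"] by (simp add: Ex_add Ex_const)
  also have "\<dots> \<le> lam + (1/lam) * real n" using G_sq l by (intro add_left_mono mult_left_mono) auto
  finally show ?thesis by simp
qed

lemma G_bound: "\<bar>G s C\<bar> \<le> real (length C)"
proof (induct C arbitrary: s)
  case Nil then show ?case by simp
next
  case (Cons c C)
  have "\<bar>T s (snd c)\<bar> \<le> 1" using p_pos[of x] px_le1 by (auto simp: T_def)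
  then show ?case using Cons[of "fst c s"] by simp
qed

end

lemma occ_le_cnt:
  "occ w (prefix_of \<alpha> N) \<le> card {i. i < N \<and> win \<alpha> i (length w) = w} + 1"
proof -
  have "{i. i + length w \<le> N \<and> win \<alpha> i (length w) = w} \<subseteq> insert N {i. i < N \<and> win \<alpha> i (length w) = w}"
    by auto
  then have "card {i. i + length w \<le> N \<and> win \<alpha> i (length w) = w} \<le> card (insert N {i. i < N \<and> win \<alpha> i (length w) = w})"
    by (intro card_mono) auto
  also have "\<dots> \<le> card {i. i < N \<and> win \<alpha> i (length w) = w} + 1"
    by (simp add: card_insert_if)
  finally show ?thesis by (simp add: occ_prefix)
qed

lemma list_all2_kap:
  "list_all2 (\<lambda>b c. b \<in> W c) w C \<Longrightarrow> (\<forall>c. W c \<subseteq> k -` {c}) \<Longrightarrow> map k w = C"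
  by (induct rule: list_all2_induct) auto

context clset begin

definition cntC :: "nat \<Rightarrow> (('s \<Rightarrow> 's) \<times> bool) list \<Rightarrow> nat \<Rightarrow> nat" where
  "cntC n C N = card {i. i < N \<and> map kap (win \<alpha> i n) = C}"

lemma CW_in: "map kap (win \<alpha> i n) \<in> LN n"
  by (auto simp: LN_def Gam_def)

lemma LN_len: "C \<in> LN n \<Longrightarrow> length C = n"
  by (simp add: LN_def)

lemma LN_ne: "LN n \<noteq> {}"
proof -
  have "replicate n (kap x) \<in> LN n" by (auto simp: LN_def Gam_def)
  then show ?thesis by auto
qed

lemma freq_lower:
  assumes C: "C \<in> LN n" and eta: "\<eta> > 0"
  shows "eventually (\<lambda>N. (PC C - \<eta>) * real N \<le> real (cntC n C N)) sequentially"
proof -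
  define d where "d = \<eta> / (2 * (real n + 1))"
  have d: "d > 0" using eta by (simp add: d_def)
  have "\<forall>c. \<exists>W. finite W \<and> W \<subseteq> kap -` {c} \<and> pt c - d \<le> sum p W \<and> sum p W \<le> pt c"
    using pt_approx[OF d] by blast
  then obtain Wf where Wf: "\<And>c. finite (Wf c)" "\<And>c. Wf c \<subseteq> kap -` {c}"
    "\<And>c. pt c - d \<le> sum p (Wf c)" "\<And>c. sum p (Wf c) \<le> pt c"
    by metis
  define Wd where "Wd = {w. list_all2 (\<in>) w (map Wf C)}"
  have Wd_iff: "w \<in> Wd \<longleftrightarrow> list_all2 (\<lambda>b c. b \<in> Wf c) w C" for w
    by (simp add: Wd_def list_all2_map2)
  have Wd_class: "w \<in> Wd \<Longrightarrow> map kap w = C" for w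
    using Wd_iff list_all2_kap[of Wf w C kap] Wf(2) by blast
  have Wd_len: "w \<in> Wd \<Longrightarrow> length w = n" for w
    using Wd_class LN_len[OF C] by force
  have finWd: "finite Wd"
  proof (rule finite_subset)
    show "Wd \<subseteq> {w. set w \<subseteq> (\<Union>c\<in>set C. Wf c) \<and> length w = length C}"
      unfolding Wd_def list_all2_conv_all_nth by (auto simp: in_set_conv_nth) (metis nth_mem)
    show "finite {w. set w \<subseteq> (\<Union>c\<in>set C. Wf c) \<and> length w = length C}"
      by (rule finite_lists_length_eq) (auto simp: Wf(1))
  qed
  have sumWd: "(\<Sum>w\<in>Wd. prod_list (map p w)) = prod_list (map (\<lambda>c. sum p (Wf c)) C)"
    unfolding Wd_def by (subst sum_prod_listset) (auto simp: Wf(1) o_def)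
  have approx: "PC C - real n * d \<le> prod_list (map (\<lambda>c. sum p (Wf c)) C)"
  proof -
    have "\<forall>c\<in>set C. 0 \<le> sum p (Wf c) \<and> sum p (Wf c) \<le> pt c \<and> pt c \<le> 1 \<and> pt c - sum p (Wf c) \<le> d"
      using Wf by (auto intro!: sum_nonneg simp: less_imp_le p_pos pt_le1 algebra_simps)
    from prod_list_approx[OF this] show ?thesis using LN_len[OF C] by (simp add: PC_def)
  qed
  have nd: "real n * d \<le> \<eta> / 2"
    using eta by (simp add: d_def field_simps)
  have lim: "(\<lambda>N. \<Sum>w\<in>Wd. real (occ w (prefix_of \<alpha> N)) / real N) \<longlonglongrightarrow> (\<Sum>w\<in>Wd. prod_list (map p w))"
    by (intro tendsto_sum gen)
  have ev1: "eventually (\<lambda>N. (\<Sum>w\<in>Wd. prod_list (map p w)) - \<eta>/4 < (\<Sum>w\<in>Wd. real (occ w (prefix_of \<alpha> N)) / real N)) sequentially"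
    using lim eta by (intro order_tendstoD(1)) auto
  have ev2: "eventually (\<lambda>N. real (card Wd) / real N < \<eta>/4) sequentially"
  proof -
    have "(\<lambda>N. real (card Wd) / real N) \<longlonglongrightarrow> 0"
      by (rule tendsto_divide_0[OF tendsto_const]) (rule filterlim_at_top_imp_at_infinity[OF filterlim_real_sequentially])
    then show ?thesis using eta by (intro order_tendstoD(2)) auto
  qed
  have ev3: "eventually (\<lambda>N. N \<ge> 1) sequentially" by (rule eventually_ge_at_top)
  show ?thesis
    using ev1 ev2 ev3
  proof eventually_elim
    case (elim N)
    have NP: "real N > 0" using elim by simp
    have disj: "disjoint_family_on (\<lambda>w. {i. i < N \<and> win \<alpha> i n = w}) Wd"
      by (auto simp: disjoint_family_on_def)
    have sub: "(\<Union>w\<in>Wd. {i. i < N \<and> win \<alpha> i n = w}) \<subseteq> {i. i < N \<and> map kap (win \<alpha> i n) = C}"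
      using Wd_class by auto
    have "(\<Sum>w\<in>Wd. card {i. i < N \<and> win \<alpha> i n = w}) = card (\<Union>w\<in>Wd. {i. i < N \<and> win \<alpha> i n = w})"
      by (rule card_UN_disjoint'[symmetric]) (use finWd disj in auto)
    also have "\<dots> \<le> cntC n C N"
      unfolding cntC_def by (intro card_mono sub) auto
    finally have c1: "(\<Sum>w\<in>Wd. real (card {i. i < N \<and> win \<alpha> i n = w})) \<le> real (cntC n C N)"
      by (simp flip: of_nat_sum)
    have "(\<Sum>w\<in>Wd. real (occ w (prefix_of \<alpha> N))) \<le> (\<Sum>w\<in>Wd. real (card {i. i < N \<and> win \<alpha> i n = w}) + 1)"
    proof (intro sum_mono)
      fix w assume "w \<in> Wd"
      then have "length w = n" by (rule Wd_len)
      then show "real (occ w (prefix_of \<alpha> N)) \<le> real (card {i. i < N \<and> win \<alpha> i n = w}) + 1"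
        using occ_le_cnt[of w \<alpha> N] by simp
    qed
    also have "\<dots> = (\<Sum>w\<in>Wd. real (card {i. i < N \<and> win \<alpha> i n = w})) + real (card Wd)"
      by (simp add: sum.distrib)
    finally have c2: "(\<Sum>w\<in>Wd. real (occ w (prefix_of \<alpha> N))) \<le> real (cntC n C N) + real (card Wd)"
      using c1 by linarith
    have "(\<Sum>w\<in>Wd. real (occ w (prefix_of \<alpha> N)) / real N) = (\<Sum>w\<in>Wd. real (occ w (prefix_of \<alpha> N))) / real N"
      by (simp add: sum_divide_distrib)
    also have "\<dots> \<le> real (cntC n C N) / real N + real (card Wd) / real N"
      using c2 NP by (simp add: add_divide_distrib[symmetric] divide_right_mono)
    finally have "PC C - \<eta> \<le> real (cntC n C N) / real N"
      using elim sumWd approx nd by linarith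
    then show ?case using NP by (simp add: field_simps)
  qed
qed

lemma sum_cntC: "(\<Sum>C\<in>LN n. real (cntC n C N)) = real N"
proof -
  have "(\<Sum>C\<in>LN n. cntC n C N) = card (\<Union>C\<in>LN n. {i. i < N \<and> map kap (win \<alpha> i n) = C})"
    unfolding cntC_def
    by (rule card_UN_disjoint'[symmetric]) (auto simp: finite_LN disjoint_family_on_def)
  also have "(\<Union>C\<in>LN n. {i. i < N \<and> map kap (win \<alpha> i n) = C}) = {..<N}"
    using CW_in by auto
  finally show ?thesis by (simp flip: of_nat_sum)
qed

lemma freq_upper:
  assumes eta: "\<eta> > 0"
  shows "eventually (\<lambda>N. \<forall>C\<in>LN n. real (cntC n C N) \<le> (PC C + \<eta>) * real N) sequentially"
proof -
  define L where "L = card (LN n)"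
  have L: "L \<ge> 1" using LN_ne finite_LN unfolding L_def
    by (metis One_nat_def Suc_leI card_gt_0_iff)
  define \<eta>' where "\<eta>' = \<eta> / real L"
  have eta': "\<eta>' > 0" using eta L by (simp add: \<eta>'_def)
  have "eventually (\<lambda>N. \<forall>C\<in>LN n. (PC C - \<eta>') * real N \<le> real (cntC n C N)) sequentially"
    using finite_LN freq_lower[OF _ eta'] by (simp add: eventually_ball_finite)
  then show ?thesis
  proof eventually_elim
    case (elim N)
    show ?case
    proof
      fix C assume C: "C \<in> LN n"
      have "real N = real (cntC n C N) + (\<Sum>C'\<in>LN n - {C}. real (cntC n C' N))"
        using sum_cntC[of n N] sum.remove[OF finite_LN C, of "\<lambda>C. real (cntC n C N)"] by simp
      moreover have "(\<Sum>C'\<in>LN n - {C}. (PC C' - \<eta>') * real N) \<le> (\<Sum>C'\<in>LN n - {C}. real (cntC n C' N))"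
        using elim by (intro sum_mono) auto
      moreover have "(\<Sum>C'\<in>LN n - {C}. (PC C' - \<eta>') * real N)
          = ((\<Sum>C'\<in>LN n - {C}. PC C') - real (card (LN n - {C})) * \<eta>') * real N"
        by (simp add: sum_distrib_right[symmetric] sum_subtractf)
      moreover have "(\<Sum>C'\<in>LN n - {C}. PC C') = 1 - PC C"
        using sum_PC[of n] sum.remove[OF finite_LN C, of PC] by simp
      moreover have "real (card (LN n - {C})) * \<eta>' \<le> \<eta>"
      proof -
        have "card (LN n - {C}) \<le> L" unfolding L_def by (intro card_mono finite_LN) auto
        then have "real (card (LN n - {C})) * \<eta>' \<le> real L * \<eta>'"
          using eta' by (intro mult_right_mono) auto
        also have "\<dots> = \<eta>" using L by (simp add: \<eta>'_def)
        finally show ?thesis .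
      qed
      moreover have "real (card (LN n - {C})) * \<eta>' * real N \<le> \<eta> * real N"
        using calculation(5) by (intro mult_right_mono) auto
      ultimately show "real (cntC n C N) \<le> (PC C + \<eta>) * real N"
        by (simp add: algebra_simps)
    qed
  qed
qed

definition Xs :: "nat \<Rightarrow> real" where
  "Xs t = T (runs \<delta> q0 \<alpha> t) (\<alpha> t = x)"

lemma runs_Q: "runs \<delta> q0 \<alpha> t \<in> Q"
  using runs_in[of q0 Q \<delta>] q0Q \<delta>Q by blast

lemma window: "(\<Sum>j<n. Xs (i + j)) = G (runs \<delta> q0 \<alpha> i) (map kap (win \<alpha> i n))"
proof (induct n arbitrary: i)
  case 0 then show ?case by simp
next
  case (Suc n)
  have "(\<Sum>j<Suc n. Xs (i + j)) = Xs i + (\<Sum>j<n. Xs (Suc i + j))"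
    by (subst sum.lessThan_Suc_shift) simp
  also have "\<dots> = Xs i + G (runs \<delta> q0 \<alpha> (Suc i)) (map kap (win \<alpha> (Suc i) n))"
    by (simp only: Suc[of "Suc i"])
  also have "runs \<delta> q0 \<alpha> (Suc i) = fst (kap (\<alpha> i)) (runs \<delta> q0 \<alpha> i)"
    using runs_Q[of i] by (simp add: kap_def)
  finally show ?case by (simp add: win_Suc Xs_def kap_def)
qed

lemma Xs_bound: "\<bar>Xs t\<bar> \<le> 1"
  using p_pos[of x] px_le1 by (auto simp: Xs_def T_def)

lemma Ex_sumQ: "Ex n (\<lambda>C. \<Sum>s\<in>Q. \<bar>G s C\<bar>) = (\<Sum>s\<in>Q. Ex n (\<lambda>C. \<bar>G s C\<bar>))"
  unfolding Ex_sum by (simp add: sum_distrib_left sum.swap[of _ Q])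

theorem CL: "(\<lambda>N. (\<Sum>t<N. Xs t) / real N) \<longlonglongrightarrow> 0"
proof (rule tendstoI)
  fix \<epsilon> :: real assume eps: "\<epsilon> > 0"
  define K where "K = card Q"
  have K: "K \<ge> 1" using finQ q0Q unfolding K_def by (metis One_nat_def Suc_leI card_gt_0_iff empty_iff)
  define n where "n = nat \<lceil>64 * real K ^ 2 / \<epsilon>^2\<rceil> + 1"
  have n1: "n \<ge> 1" by (simp add: n_def)
  have nK: "64 * real K ^ 2 / \<epsilon>^2 \<le> real n"
    unfolding n_def by linarith
  then have nK': "8 * real K ^ 2 / \<epsilon> \<le> \<epsilon> * real n / 8"
    using eps by (simp add: field_simps power2_eq_square)
  define M where "M C = (\<Sum>s\<in>Q. \<bar>G s C\<bar>)" for C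
  define lam where "lam = \<epsilon> * real n / (8 * real K)"
  have lam: "lam > 0" using eps n1 K by (simp add: lam_def)
  have "Ex n M = (\<Sum>s\<in>Q. Ex n (\<lambda>C. \<bar>G s C\<bar>))" unfolding M_def by (rule Ex_sumQ)
  also have "\<dots> \<le> (\<Sum>s\<in>Q. lam + real n / lam)" by (intro sum_mono G_abs lam)
  also have "\<dots> = real K * (lam + real n / lam)" by (simp add: K_def)
  also have "\<dots> = \<epsilon> * real n / 8 + 8 * real K ^ 2 / \<epsilon>"
    using K eps n1 by (simp add: lam_def field_simps power2_eq_square)
  also have "\<dots> \<le> \<epsilon> * real n / 4" using nK' by simp
  finally have EM: "(\<Sum>C\<in>LN n. PC C * M C) \<le> \<epsilon> * real n / 4" by (simp add: Ex_sum)
  have Mb: "C \<in> LN n \<Longrightarrow> 0 \<le> M C \<and> M C \<le> real K * real n" for C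
  proof -
    assume C: "C \<in> LN n"
    have "M C \<le> (\<Sum>s\<in>Q. real n)" unfolding M_def
      using G_bound LN_len[OF C] by (intro sum_mono) force
    then show ?thesis by (simp add: K_def M_def sum_nonneg)
  qed
  define L where "L = card (LN n)"
  define \<eta> where "\<eta> = \<epsilon> / (4 * real K * (real L + 1))"
  have eta: "\<eta> > 0" using eps K by (simp add: \<eta>_def)
  have etaL: "\<eta> * real L * (real K * real n) \<le> \<epsilon> * real n / 4"
  proof -
    have ne: "4 * real K * (real L + 1) \<noteq> 0" using K by simp
    have e1: "\<eta> * (real K * (real L + 1)) = \<epsilon> / 4"
      using ne by (simp add: \<eta>_def field_simps)
    have "\<eta> * real L * (real K * real n) \<le> \<eta> * (real L + 1) * (real K * real n)"
      using eta by (intro mult_right_mono mult_left_mono) auto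
    also have "\<dots> = \<eta> * (real K * (real L + 1)) * real n" by (simp add: algebra_simps)
    finally show ?thesis using e1 by simp
  qed
  have ev_up: "eventually (\<lambda>N. \<forall>C\<in>LN n. real (cntC n C N) \<le> (PC C + \<eta>) * real N) sequentially"
    by (rule freq_upper[OF eta])
  have ev_N: "eventually (\<lambda>N. real N > 4 * real n / \<epsilon>) sequentially"
    using filterlim_real_sequentially by (simp add: filterlim_at_top_dense)
  show "eventually (\<lambda>N. dist ((\<Sum>t<N. Xs t) / real N) 0 < \<epsilon>) sequentially"
    using ev_up ev_N
  proof eventually_elim
    case (elim N)
    have "4 * real n / \<epsilon> > 0" using eps n1 by simp
    then have NP: "real N > 0" using elim(2) by linarith
    have A: "\<bar>real n * (\<Sum>t<N. Xs t) - (\<Sum>i<N. \<Sum>j<n. Xs (i + j))\<bar> \<le> 2 * real n * real n"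
      by (rule double_count[OF Xs_bound])
    have "\<bar>\<Sum>i<N. \<Sum>j<n. Xs (i + j)\<bar> = \<bar>\<Sum>i<N. G (runs \<delta> q0 \<alpha> i) (map kap (win \<alpha> i n))\<bar>"
      by (simp add: window)
    also have "\<dots> \<le> (\<Sum>i<N. \<bar>G (runs \<delta> q0 \<alpha> i) (map kap (win \<alpha> i n))\<bar>)" by (rule sum_abs)
    also have "\<dots> \<le> (\<Sum>i<N. M (map kap (win \<alpha> i n)))"
      unfolding M_def using runs_Q finQ
      by (intro sum_mono member_le_sum[where f = "\<lambda>s. \<bar>G s _\<bar>"]) auto
    also have "(\<Sum>i<N. M (map kap (win \<alpha> i n))) = (\<Sum>C\<in>LN n. real (cntC n C N) * M C)"
    proof -
      have "(\<Sum>i<N. M (map kap (win \<alpha> i n)))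
          = (\<Sum>C\<in>LN n. \<Sum>i\<in>{i\<in>{..<N}. map kap (win \<alpha> i n) = C}. M (map kap (win \<alpha> i n)))"
        by (rule sum.group[symmetric]) (auto simp: finite_LN CW_in)
      also have "\<dots> = (\<Sum>C\<in>LN n. \<Sum>i\<in>{i\<in>{..<N}. map kap (win \<alpha> i n) = C}. M C)"
        by (intro sum.cong) auto
      also have "\<dots> = (\<Sum>C\<in>LN n. real (cntC n C N) * M C)"
        by (intro sum.cong) (auto simp: cntC_def)
      finally show ?thesis .
    qed
    also have "\<dots> \<le> (\<Sum>C\<in>LN n. (PC C + \<eta>) * real N * M C)"
      using elim Mb by (intro sum_mono mult_right_mono) auto
    also have "\<dots> = real N * ((\<Sum>C\<in>LN n. PC C * M C) + \<eta> * (\<Sum>C\<in>LN n. M C))"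
      by (simp add: sum_distrib_left sum_distrib_right sum.distrib algebra_simps)
    also have "\<dots> \<le> real N * (\<epsilon> * real n / 4 + \<epsilon> * real n / 4)"
    proof -
      have "(\<Sum>C\<in>LN n. M C) \<le> (\<Sum>C\<in>LN n. real K * real n)" using Mb by (intro sum_mono) auto
      then have "\<eta> * (\<Sum>C\<in>LN n. M C) \<le> \<eta> * real L * (real K * real n)"
        using eta by (simp add: L_def mult_left_mono)
      then show ?thesis using EM etaL NP by (intro mult_left_mono) auto
    qed
    finally have B: "\<bar>\<Sum>i<N. \<Sum>j<n. Xs (i + j)\<bar> \<le> real N * (\<epsilon> * real n / 2)" by simp
    have "real n * \<bar>\<Sum>t<N. Xs t\<bar> \<le> real N * (\<epsilon> * real n / 2) + 2 * real n * real n"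
      using A B by (simp add: abs_mult)
    then have "real n * \<bar>\<Sum>t<N. Xs t\<bar> \<le> real n * (real N * \<epsilon> / 2 + 2 * real n)"
      by (simp add: algebra_simps)
    then have "\<bar>\<Sum>t<N. Xs t\<bar> \<le> real N * \<epsilon> / 2 + 2 * real n"
      using n1 by (simp add: mult_le_cancel_left_pos)
    moreover have "2 * real n < real N * \<epsilon> / 2"
      using elim eps by (simp add: field_simps)
    ultimately have "\<bar>\<Sum>t<N. Xs t\<bar> < real N * \<epsilon>" by linarith
    then show ?case using NP by (simp add: dist_real_def field_simps)
  qed
qed

end

lemma cntP_add_le: "cntP P (N + k) \<le> cntP P N + k"
  by (induct k) (auto simp: cntP_Suc)

lemma foldl_take_win: "d \<le> n \<Longrightarrow> take d (win \<alpha> i n) = win \<alpha> i d"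
  by (simp add: win_def take_map take_upt)

lemma universal_word:
  fixes \<delta> :: "'s \<Rightarrow> 'a \<Rightarrow> 's"
  assumes "finite A" and live: "\<forall>q\<in>L. \<exists>v. foldl \<delta> q v \<in> F"
  shows "\<exists>V. \<forall>q\<in>A. \<exists>j\<le>length V. foldl \<delta> q (take j V) \<in> F \<or> foldl \<delta> q (take j V) \<notin> L"
  using assms(1)
proof (induct A rule: finite_induct)
  case empty then show ?case by auto
next
  case (insert q A)
  then obtain V where V: "\<forall>q\<in>A. \<exists>j\<le>length V. foldl \<delta> q (take j V) \<in> F \<or> foldl \<delta> q (take j V) \<notin> L"
    by blast
  have mono: "\<exists>j\<le>length (V @ W). foldl \<delta> r (take j (V @ W)) \<in> F \<or> foldl \<delta> r (take j (V @ W)) \<notin> L"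
    if "\<exists>j\<le>length V. foldl \<delta> r (take j V) \<in> F \<or> foldl \<delta> r (take j V) \<notin> L" for r W
    using that by (metis take_append le_add1 length_append order_trans diff_is_0_eq append_Nil2 take0)
  show ?case
  proof (cases "\<exists>j\<le>length V. foldl \<delta> q (take j V) \<in> F \<or> foldl \<delta> q (take j V) \<notin> L")
    case True then show ?thesis using V by (intro exI[of _ V]) auto
  next
    case False
    then have "foldl \<delta> q V \<in> L" by (metis order_refl take_all)
    then obtain v where v: "foldl \<delta> (foldl \<delta> q V) v \<in> F" using live by blast
    have "\<exists>j\<le>length (V @ v). foldl \<delta> q (take j (V @ v)) \<in> F \<or> foldl \<delta> q (take j (V @ v)) \<notin> L"
      using v by (intro exI[of _ "length (V @ v)"]) auto
    then show ?thesis using V mono by (intro exI[of _ "V @ v"]) auto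
  qed
qed

lemma prod_pos: "(\<And>a. 0 < p a) \<Longrightarrow> (0::real) < prod_list (map p (w :: 'a list))"
  by (induct w) auto

lemma (in clset) PD:
  assumes S: "infinite {t. runs \<delta> q0 \<alpha> t \<in> F}"
  shows "\<exists>c>0. eventually (\<lambda>N. c * real N \<le> real (cntP (\<lambda>t. runs \<delta> q0 \<alpha> t \<in> F) N)) sequentially"
proof -
  define L where "L = {q. \<exists>v. foldl \<delta> q v \<in> F}"
  have runL: "runs \<delta> q0 \<alpha> t \<in> L" for t
  proof -
    obtain t' where t': "t' \<in> {t. runs \<delta> q0 \<alpha> t \<in> F}" "t < t'"
      using S by (metis infinite_nat_iff_unbounded)
    have "runs \<delta> q0 \<alpha> (t + (t' - t)) = foldl \<delta> (runs \<delta> q0 \<alpha> t) (win \<alpha> t (t' - t))"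
      by (rule runs_add)
    then show ?thesis using t' by (auto simp: L_def)
  qed
  obtain V where V: "\<forall>q\<in>Q. \<exists>j\<le>length V. foldl \<delta> q (take j V) \<in> F \<or> foldl \<delta> q (take j V) \<notin> L"
    using universal_word[OF finQ, where F=F and L=L and \<delta>=\<delta>] by (auto simp: L_def)
  define k where "k = length V"
  define sel where "sel = cntP (\<lambda>t. runs \<delta> q0 \<alpha> t \<in> F)"
  have occV: "\<exists>d\<le>k. runs \<delta> q0 \<alpha> (i + d) \<in> F" if "win \<alpha> i k = V" for i
  proof -
    obtain j where j: "j \<le> k" "foldl \<delta> (runs \<delta> q0 \<alpha> i) (take j V) \<in> F \<or> foldl \<delta> (runs \<delta> q0 \<alpha> i) (take j V) \<notin> L"
      using V runs_Q[of i] by (auto simp: k_def)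
    have "runs \<delta> q0 \<alpha> (i + j) = foldl \<delta> (runs \<delta> q0 \<alpha> i) (take j V)"
      using runs_add[of \<delta> q0 \<alpha> i j] foldl_take_win[OF j(1), of \<alpha> i] that by simp
    then show ?thesis using j runL[of "i + j"] by auto
  qed
  have count: "card {i. i < N \<and> win \<alpha> i k = V} \<le> (k + 1) * sel (N + k)" for N
  proof -
    define T where "T = {t. t < N + k \<and> runs \<delta> q0 \<alpha> t \<in> F}"
    have sub: "{i. i < N \<and> win \<alpha> i k = V} \<subseteq> (\<Union>d\<in>{..k}. {i. i + d \<in> T})"
      using occV unfolding T_def by fastforce
    have fT: "finite T" unfolding T_def by auto
    have cd: "card {i. i + d \<in> T} \<le> card T" for d
    proof -
      have "card {i. i + d \<in> T} = card ((\<lambda>i. i + d) ` {i. i + d \<in> T})"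
        by (rule card_image[symmetric]) (auto simp: inj_on_def)
      also have "\<dots> \<le> card T" by (intro card_mono fT) auto
      finally show ?thesis .
    qed
    have fin: "finite {i. i + d \<in> T}" for d
      by (rule finite_subset[of _ "{..<N+k}"]) (auto simp: T_def)
    have "card {i. i < N \<and> win \<alpha> i k = V} \<le> card (\<Union>d\<in>{..k}. {i. i + d \<in> T})"
      by (intro card_mono sub) (auto simp: fin)
    also have "\<dots> \<le> (\<Sum>d\<in>{..k}. card {i. i + d \<in> T})" by (rule card_UN_le) simp
    also have "\<dots> \<le> (\<Sum>d\<in>{..k}. card T)" by (intro sum_mono cd)
    finally show ?thesis by (simp add: sel_def cntP_def T_def)
  qed
  define pV where "pV = prod_list (map p V)"
  have pV: "pV > 0" unfolding pV_def using prod_pos[of p V] p_pos by blast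
  define c where "c = pV / (4 * (real k + 1))"
  have c: "c > 0" using pV by (simp add: c_def)
  have ev1: "eventually (\<lambda>N. pV / 2 < real (occ V (prefix_of \<alpha> N)) / real N) sequentially"
    using gen[of V] pV by (intro order_tendstoD(1)) (auto simp: pV_def)
  have ev2: "eventually (\<lambda>N. real N > 4 * (1 + real k * (real k + 1)) / pV) sequentially"
    using filterlim_real_sequentially by (simp add: filterlim_at_top_dense)
  show ?thesis
  proof (intro exI[of _ c] conjI c)
    show "eventually (\<lambda>N. c * real N \<le> real (cntP (\<lambda>t. runs \<delta> q0 \<alpha> t \<in> F) N)) sequentially"
      using ev1 ev2
    proof eventually_elim
      case (elim N)
      have q: "4 * (1 + real k * (real k + 1)) / pV > 0" using pV by (intro divide_pos_pos) (auto intro: add_pos_nonneg)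
      then have NP: "real N > 0" using elim(2) by linarith
      have "pV / 2 * real N < real (occ V (prefix_of \<alpha> N))"
        using elim(1) NP by (simp add: field_simps)
      also have "\<dots> \<le> real (card {i. i < N \<and> win \<alpha> i k = V}) + 1"
        using occ_le_cnt[of V \<alpha> N] by (simp add: k_def)
      also have "\<dots> \<le> real ((k + 1) * sel (N + k)) + 1"
        using count[of N] by (simp only: of_nat_le_iff add_le_cancel_right)
      also have "\<dots> \<le> (real k + 1) * (real (sel N) + real k) + 1"
      proof -
        have "real (sel (N + k)) \<le> real (sel N) + real k"
          using cntP_add_le[of _ N k] unfolding sel_def by (metis of_nat_add of_nat_le_iff)
        then have "real ((k + 1) * sel (N + k)) \<le> (real k + 1) * (real (sel N) + real k)"
          using mult_left_mono[of "real (sel (N + k))" "real (sel N) + real k" "real k + 1"]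
          by (simp add: algebra_simps)
        then show ?thesis by simp
      qed
      finally have A: "pV / 2 * real N < (real k + 1) * real (sel N) + real k * (real k + 1) + 1"
        by (simp add: algebra_simps)
      have B: "pV / 4 * real N > real k * (real k + 1) + 1"
        using elim(2) pV by (simp add: field_simps)
      have "pV / 4 * real N < (real k + 1) * real (sel N)" using A B by linarith
      then show ?case by (simp add: c_def sel_def field_simps)
    qed
  qed
qed

lemma sum_ind: "(\<Sum>t<N. if P t then (1::real) else 0) = real (cntP P N)"
  by (induct N) (auto simp: cntP_Suc)

lemma compose_cnt:
  assumes "f \<longlonglongrightarrow> L" "infinite S"
  shows "(\<lambda>N. f (cntP (\<lambda>t. t \<in> S) N)) \<longlonglongrightarrow> L"
  using filterlim_compose[OF assms(1) cntP_tendsto[OF assms(2)]] by (simp add: o_def)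

lemma occ_Nil: "occ [] (prefix_of \<beta> M) = Suc M"
proof -
  have "{i. i \<le> M} = {..M}" by auto
  then show ?thesis by (simp add: occ_prefix)
qed

lemma IC:
  fixes \<delta> :: "'s \<Rightarrow> 'a \<Rightarrow> 's" and p :: "'a \<Rightarrow> real"
  assumes p_pos: "\<And>a. 0 < p a" and p_sum: "(p has_sum 1) UNIV"
    and gen: "\<And>w. (\<lambda>N. real (occ w (prefix_of \<alpha> N)) / real N) \<longlonglongrightarrow> prod_list (map p w)"
    and finQ: "finite Q" and q0Q: "q0 \<in> Q" and \<delta>Q: "\<And>s a. s \<in> Q \<Longrightarrow> \<delta> s a \<in> Q"
    and Sdef: "S = {t. runs \<delta> q0 \<alpha> t \<in> F}" and S: "infinite S"
  shows "(\<lambda>N. real (occ u (prefix_of (\<alpha> \<circ> enumerate S) (cntP (\<lambda>t. t \<in> S) N)))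
              / real (cntP (\<lambda>t. t \<in> S) N)) \<longlonglongrightarrow> prod_list (map p u)"
proof (induct u rule: rev_induct)
  case Nil
  show ?case using compose_cnt[OF LIMSEQ_Suc_n_over_n S] by (simp add: occ_Nil)
next
  case (snoc x u)
  define \<beta> where "\<beta> = \<alpha> \<circ> enumerate S"
  define s where "s = cntP (\<lambda>t. t \<in> S)"
  interpret orig: clset p \<alpha> Q \<delta> q0 F x
    by unfold_locales (use assms in auto)
  obtain c where c: "c > 0" and evc: "eventually (\<lambda>N. c * real N \<le> real (s N)) sequentially"
    using orig.PD S unfolding Sdef s_def by auto
  define Q' where "Q' = Q \<times> Pow {0..length u}"
  define \<delta>' where "\<delta>' = (\<lambda>(q, J) a. (\<delta> q a, if q \<in> F then jstep u J a else J))"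
  define F' where "F' = {(q, J). q \<in> F \<and> length u \<in> J}"
  interpret prod: clset p \<alpha> Q' \<delta>' "(q0, {0})" F' x
  proof unfold_locales
    show "finite Q'" using finQ by (simp add: Q'_def)
    show "(q0, {0}) \<in> Q'" using q0Q by (simp add: Q'_def)
    show "\<delta>' s a \<in> Q'" if "s \<in> Q'" for s a
      using that \<delta>Q jstep_sub[of u _ a] by (auto simp: Q'_def \<delta>'_def split: prod.splits)
  qed (use assms in auto)
  have run': "runs \<delta>' (q0, {0}) \<alpha> t = (runs \<delta> q0 \<alpha> t, Jset u (prefix_of \<beta> (s t)))" for t
  proof (induct t)
    case 0 then show ?case by (simp add: s_def prefix_of_def Jset_Nil)
  next
    case (Suc t)
    show ?case
    proof (cases "t \<in> S")
      case True
      have e: "\<beta> (s t) = \<alpha> t" using enum_cntP[OF S True] by (simp add: \<beta>_def s_def)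
      have "s (Suc t) = Suc (s t)" using True by (simp add: s_def cntP_Suc)
      then show ?thesis using Suc True e
        by (simp add: \<delta>'_def prefix_of_Suc Jset_snoc Sdef)
    next
      case False
      have "s (Suc t) = s t" using False by (simp add: s_def cntP_Suc)
      then show ?thesis using Suc False by (simp add: \<delta>'_def Sdef)
    qed
  qed
  have inF': "runs \<delta>' (q0, {0}) \<alpha> t \<in> F' \<longleftrightarrow> t \<in> S \<and> length u \<in> Jset u (prefix_of \<beta> (s t))" for t
    using run' by (simp add: F'_def Sdef)
  define A where "A N = cntP (\<lambda>t. runs \<delta>' (q0, {0}) \<alpha> t \<in> F' \<and> \<alpha> t = x) N" for N
  define B where "B N = cntP (\<lambda>t. runs \<delta>' (q0, {0}) \<alpha> t \<in> F') N" for N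
  have sumX: "(\<Sum>t<N. prod.Xs t) = real (A N) - p x * real (B N)" for N
  proof -
    have "(\<Sum>t<N. prod.Xs t) = (\<Sum>t<N. (if runs \<delta>' (q0, {0}) \<alpha> t \<in> F' \<and> \<alpha> t = x then 1 else 0)
        - p x * (if runs \<delta>' (q0, {0}) \<alpha> t \<in> F' then 1 else 0))"
      by (intro sum.cong) (auto simp: prod.Xs_def prod.T_def)
    also have "\<dots> = real (A N) - p x * real (B N)"
      by (simp add: sum_subtractf sum_distrib_left[symmetric] sum_ind A_def B_def)
    finally show ?thesis .
  qed
  have A_eq: "A N = occ (u @ [x]) (prefix_of \<beta> (s N))" for N
  proof -
    have "A N = card {t. t < N \<and> t \<in> S \<and> (\<lambda>m a. length u \<in> Jset u (prefix_of \<beta> m) \<and> a = x) (s t) (\<alpha> t)}"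
      unfolding A_def cntP_def inF' by (intro arg_cong[where f=card]) auto
    also have "\<dots> = card {m. m < s N \<and> length u \<in> Jset u (prefix_of \<beta> m) \<and> \<beta> m = x}"
      unfolding s_def \<beta>_def by (rule card_sel_transfer[OF S])
    also have "\<dots> = occ (u @ [x]) (prefix_of \<beta> (s N))" by (rule count_suffix_snoc)
    finally show ?thesis .
  qed
  have B_eq: "B N = card {m. m < s N \<and> length u \<in> Jset u (prefix_of \<beta> m)}" for N
  proof -
    have "B N = card {t. t < N \<and> t \<in> S \<and> (\<lambda>m a. length u \<in> Jset u (prefix_of \<beta> m)) (s t) (\<alpha> t)}"
      unfolding B_def cntP_def inF' by (intro arg_cong[where f=card]) auto
    also have "\<dots> = card {m. m < s N \<and> length u \<in> Jset u (prefix_of \<beta> m)}"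
      unfolding s_def \<beta>_def by (rule card_sel_transfer[OF S])
    finally show ?thesis .
  qed
  have Bo: "\<bar>real (B N) - real (occ u (prefix_of \<beta> (s N)))\<bar> \<le> 1" for N
    using count_suffix_le[where M="s N" and u=u and \<beta>=\<beta>] B_eq[of N] by linarith
  define g1 where "g1 N = (real (A N) - p x * real (B N)) / real (s N)" for N
  define g2 where "g2 N = (real (B N) - real (occ u (prefix_of \<beta> (s N)))) / real (s N)" for N
  have g1: "g1 \<longlonglongrightarrow> 0"
  proof (rule Lim_null_comparison)
    show "eventually (\<lambda>N. norm (g1 N) \<le> \<bar>(\<Sum>t<N. prod.Xs t) / real N\<bar> / c) sequentially"
      using evc eventually_gt_at_top[of 0]
    proof eventually_elim
      case (elim N)
      have pos: "0 < c * real N" using c elim(2) by simp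
      have "norm (g1 N) = \<bar>real (A N) - p x * real (B N)\<bar> / real (s N)"
        by (simp add: g1_def)
      also have "\<dots> \<le> \<bar>real (A N) - p x * real (B N)\<bar> / (c * real N)"
        using elim(1) pos by (intro divide_left_mono) auto
      also have "\<dots> = \<bar>(\<Sum>t<N. prod.Xs t) / real N\<bar> / c"
        using c elim(2) by (simp add: sumX field_simps)
      finally show ?case .
    qed
    show "(\<lambda>N. \<bar>(\<Sum>t<N. prod.Xs t) / real N\<bar> / c) \<longlonglongrightarrow> 0"
      using tendsto_divide[OF tendsto_rabs_zero[OF prod.CL] tendsto_const[of c]] c by simp
  qed
  have g2: "g2 \<longlonglongrightarrow> 0"
  proof (rule Lim_null_comparison)
    show "eventually (\<lambda>N. norm (g2 N) \<le> 1 / real (s N)) sequentially"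
    proof (intro always_eventually allI)
      fix N
      show "norm (g2 N) \<le> 1 / real (s N)"
        using Bo[of N] by (simp add: g2_def abs_divide divide_right_mono)
    qed
    show "(\<lambda>N. 1 / real (s N)) \<longlonglongrightarrow> 0"
      unfolding s_def by (rule compose_cnt[OF lim_1_over_n S])
  qed
  have IH: "(\<lambda>N. real (occ u (prefix_of \<beta> (s N))) / real (s N)) \<longlonglongrightarrow> prod_list (map p u)"
    using snoc unfolding \<beta>_def s_def .
  have eq: "real (occ (u @ [x]) (prefix_of \<beta> (s N))) / real (s N)
      = g1 N + p x * g2 N + p x * (real (occ u (prefix_of \<beta> (s N))) / real (s N))" for N
    by (simp add: g1_def g2_def A_eq diff_divide_distrib add_divide_distrib algebra_simps)
  have "(\<lambda>N. g1 N + p x * g2 N + p x * (real (occ u (prefix_of \<beta> (s N))) / real (s N)))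
      \<longlonglongrightarrow> 0 + p x * 0 + p x * prod_list (map p u)"
    by (intro tendsto_intros g1 g2 IH)
  then show ?case unfolding eq[symmetric] by (simp add: \<beta>_def s_def mult.commute o_def)
qed

lemma selected_eq: "selected \<delta> qs F \<alpha> = {t. runs \<delta> qs \<alpha> t \<in> F}"
  by (simp add: selected_def run_runs)

lemma strict_mono_enum: "infinite S \<Longrightarrow> strict_mono (enumerate S)"
  by (simp add: strict_mono_def enumerate_mono)

lemma from_cnt:
  assumes S: "infinite S" and lim: "(\<lambda>N. f (cntP (\<lambda>t. t \<in> S) N)) \<longlonglongrightarrow> L"
  shows "f \<longlonglongrightarrow> L"
proof -
  have "((\<lambda>N. f (cntP (\<lambda>t. t \<in> S) N)) \<circ> enumerate S) \<longlonglongrightarrow> L"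
    by (rule LIMSEQ_subseq_LIMSEQ[OF lim strict_mono_enum[OF S]])
  moreover have "((\<lambda>N. f (cntP (\<lambda>t. t \<in> S) N)) \<circ> enumerate S) = f"
    using cntP_enum[OF S] by (auto simp: o_def)
  ultimately show ?thesis by simp
qed

lemma forward:
  fixes \<nu> :: "(nat \<Rightarrow> 'a) measure"
  assumes bern: "bernoulli_measure \<nu>" and adm: "\<forall>w. admissible \<nu> w"
  shows "\<forall>Q \<delta> qs F \<alpha>. is_dfa Q \<delta> qs F \<and> generic \<nu> \<alpha> \<and> infinite (selected \<delta> qs F \<alpha>)
             \<longrightarrow> generic \<nu> (select \<delta> qs F \<alpha>)"
proof (intro allI impI, elim conjE)
  fix Q \<delta> qs F \<alpha>
  assume dfa: "is_dfa Q \<delta> qs F" and g: "generic \<nu> \<alpha>" and inf: "infinite (selected \<delta> qs F \<alpha>)"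
  obtain p :: "'a \<Rightarrow> real" where p01: "\<forall>a. 0 \<le> p a \<and> p a \<le> 1" and psum: "(p has_sum 1) UNIV"
    and pm: "\<forall>w. measure \<nu> (cyl w) = prod_list (map p w)"
    using bern unfolding bernoulli_measure_def by blast
  have ppos: "0 < p a" for a
    using adm pm unfolding admissible_def by (metis list.map(1) list.map(2) mult.right_neutral prod_list.Cons prod_list.Nil)
  have gen: "(\<lambda>N. real (occ w (prefix_of \<alpha> N)) / real N) \<longlonglongrightarrow> prod_list (map p w)" for w
    using g adm pm unfolding generic_def by metis
  define S where "S = selected \<delta> qs F \<alpha>"
  have Sdef: "S = {t. runs \<delta> qs \<alpha> t \<in> F}" by (simp add: S_def selected_eq)
  have S: "infinite S" using inf by (simp add: S_def)
  have dfa': "finite Q" "qs \<in> Q" "\<And>s a. s \<in> Q \<Longrightarrow> \<delta> s a \<in> Q" using dfa by (auto simp: is_dfa_def)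
  show "generic \<nu> (select \<delta> qs F \<alpha>)"
    unfolding generic_def
  proof (intro allI impI)
    fix w
    have "(\<lambda>N. real (occ w (prefix_of (\<alpha> \<circ> enumerate S) (cntP (\<lambda>t. t \<in> S) N)))
              / real (cntP (\<lambda>t. t \<in> S) N)) \<longlonglongrightarrow> prod_list (map p w)"
      by (rule IC[OF ppos psum gen dfa'(1,2) dfa'(3) Sdef S])
    from from_cnt[OF S this]
    show "(\<lambda>N. real (occ w (prefix_of (select \<delta> qs F \<alpha>) N)) / real N) \<longlonglongrightarrow> measure \<nu> (cyl w)"
      by (simp add: pm select_def S_def o_def)
  qed
qed

locale nuset =
  fixes \<nu> :: "(nat \<Rightarrow> 'a::countable) measure"
  assumes prob: "prob_space \<nu>" and cm: "cylinder_measure \<nu>"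
begin

interpretation P: prob_space \<nu> by (rule prob)

lemma cyl_sets: "cyl w \<in> sets \<nu>"
  using cm unfolding cylinder_measure_def by auto

lemma space_UNIV: "space \<nu> = UNIV"
  using cm unfolding cylinder_measure_def by auto

lemma cyl_Nil: "cyl [] = UNIV"
  by (simp add: cyl_def)

lemma meas_Nil: "measure \<nu> (cyl []) = 1"
  unfolding cyl_Nil using P.prob_space space_UNIV by simp

lemma meas_nonneg: "0 \<le> measure \<nu> A" by simp

lemma meas_le1: "measure \<nu> (cyl w) \<le> 1"
  using P.finite_measure_mono[of "cyl w" "space \<nu>"] P.prob_space by simp

lemma cyl_snoc_sub: "cyl (w @ [a]) \<subseteq> cyl w"
  by (auto simp: cyl_def nth_append)

lemma meas_snoc_le: "measure \<nu> (cyl (w @ [a])) \<le> measure \<nu> (cyl w)"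
  by (rule P.finite_measure_mono[OF cyl_snoc_sub cyl_sets])

lemma cyl_snoc_last: "\<beta> \<in> cyl (w @ [a]) \<Longrightarrow> \<beta> (length w) = a"
  unfolding cyl_def by (drule CollectD, drule spec[of _ "length w"]) simp

lemma cyl_snoc_disj: "a \<noteq> b \<Longrightarrow> cyl (w @ [a]) \<inter> cyl (w @ [b]) = {}"
  using cyl_snoc_last[of _ w a] cyl_snoc_last[of _ w b] by blast

lemma sum_ext: "finite A \<Longrightarrow> (\<Sum>b\<in>A. measure \<nu> (cyl (w @ [b]))) = measure \<nu> (\<Union>b\<in>A. cyl (w @ [b]))"
  by (rule P.finite_measure_finite_Union[symmetric])
     (auto simp: cyl_sets disjoint_family_on_def cyl_snoc_disj)

lemma sum_ext_le: "finite A \<Longrightarrow> (\<Sum>b\<in>A. measure \<nu> (cyl (w @ [b]))) \<le> measure \<nu> (cyl w)"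
proof -
  assume A: "finite A"
  have "(\<Union>b\<in>A. cyl (w @ [b])) \<subseteq> cyl w" by (intro UN_least cyl_snoc_sub)
  then show ?thesis
    using sum_ext[OF A, of w] P.finite_measure_mono[of "\<Union>b\<in>A. cyl (w @ [b])" "cyl w"] cyl_sets
    by simp
qed

lemma CA:
  assumes eps: "\<epsilon> > 0"
  shows "\<exists>A. finite A \<and> measure \<nu> (cyl w) - \<epsilon> < (\<Sum>b\<in>A. measure \<nu> (cyl (w @ [b])))"
proof -
  define U where "U n = (\<Union>b\<in>{b. to_nat b < n}. cyl (w @ [b]))" for n
  have fin: "finite {b::'a. to_nat b < n}" for n
  proof -
    have "{b::'a. to_nat b < n} = to_nat -` {..<n}" by auto
    then show ?thesis using finite_vimageI[OF finite_lessThan inj_to_nat] by simp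
  qed
  have rng: "range U \<subseteq> sets \<nu>"
    using fin by (auto simp: U_def cyl_sets intro!: sets.finite_UN)
  have inc: "incseq U" unfolding incseq_def U_def by (intro allI impI UN_mono) auto
  have un: "(\<Union>n. U n) = cyl w"
  proof
    show "(\<Union>n. U n) \<subseteq> cyl w" unfolding U_def by (intro UN_least cyl_snoc_sub)
    show "cyl w \<subseteq> (\<Union>n. U n)"
    proof
      fix \<beta> assume b: "\<beta> \<in> cyl w"
      have "\<beta> \<in> cyl (w @ [\<beta> (length w)])"
        using b by (auto simp: cyl_def nth_append less_Suc_eq)
      then show "\<beta> \<in> (\<Union>n. U n)" by (auto simp: U_def intro!: exI[of _ "Suc (to_nat (\<beta> (length w)))"])
    qed
  qed
  have "(\<lambda>n. measure \<nu> (U n)) \<longlonglongrightarrow> measure \<nu> (cyl w)"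
    using P.finite_Lim_measure_incseq[OF rng inc] un by simp
  then have "eventually (\<lambda>n. measure \<nu> (cyl w) - \<epsilon> < measure \<nu> (U n)) sequentially"
    using eps by (intro order_tendstoD(1)) auto
  then obtain n where "measure \<nu> (cyl w) - \<epsilon> < measure \<nu> (U n)"
    by (metis eventually_sequentially order_refl)
  then show ?thesis using sum_ext[OF fin[of n], of w] fin[of n] unfolding U_def by metis
qed

lemma win_snoc_eq: "win \<alpha> i (Suc (length w)) = w @ [b] \<longleftrightarrow> win \<alpha> i (length w) = w \<and> \<alpha> (i + length w) = b"
  by (simp add: win_Suc_snoc)

lemma occ_snoc_sum:
  assumes "finite A"
  shows "(\<Sum>b\<in>A. occ (w @ [b]) (prefix_of \<alpha> N)) \<le> occ w (prefix_of \<alpha> N)"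
proof -
  define Oc where "Oc b = {i. i + length (w @ [b]) \<le> N \<and> win \<alpha> i (length (w @ [b])) = w @ [b]}" for b
  have "(\<Sum>b\<in>A. occ (w @ [b]) (prefix_of \<alpha> N)) = (\<Sum>b\<in>A. card (Oc b))"
    by (simp add: occ_prefix Oc_def)
  also have "\<dots> = card (\<Union>b\<in>A. Oc b)"
    by (rule card_UN_disjoint'[symmetric])
       (auto simp: assms Oc_def disjoint_family_on_def win_snoc_eq intro: finite_subset[of _ "{..N}"])
  also have "\<dots> \<le> card {i. i + length w \<le> N \<and> win \<alpha> i (length w) = w}"
    by (intro card_mono) (auto simp: Oc_def win_snoc_eq intro: finite_subset[of _ "{..N}"])
  finally show ?thesis by (simp add: occ_prefix)
qed

lemma occ_snoc_le: "occ (w @ [a]) (prefix_of \<alpha> N) \<le> occ w (prefix_of \<alpha> N)"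
  using occ_snoc_sum[of "{a}" w \<alpha> N] by simp

lemma Z:
  assumes g: "generic \<nu> \<alpha>" and z: "measure \<nu> (cyl v) = 0"
  shows "(\<lambda>N. real (occ v (prefix_of \<alpha> N)) / real N) \<longlonglongrightarrow> 0"
  using z
proof (induct v rule: rev_induct)
  case Nil then show ?case using meas_Nil by simp
next
  case (snoc a w)
  show ?case
  proof (cases "measure \<nu> (cyl w) = 0")
    case True
    show ?thesis
    proof (rule Lim_null_comparison)
      show "eventually (\<lambda>N. norm (real (occ (w @ [a]) (prefix_of \<alpha> N)) / real N)
          \<le> real (occ w (prefix_of \<alpha> N)) / real N) sequentially"
        using occ_snoc_le[of w a \<alpha>] by (intro always_eventually allI) (simp add: divide_right_mono)
      show "(\<lambda>N. real (occ w (prefix_of \<alpha> N)) / real N) \<longlonglongrightarrow> 0" using snoc True by simp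
    qed
  next
    case False
    then have wpos: "measure \<nu> (cyl w) > 0" using meas_nonneg[of "cyl w"] by linarith
    have gw: "(\<lambda>N. real (occ w (prefix_of \<alpha> N)) / real N) \<longlonglongrightarrow> measure \<nu> (cyl w)"
      using g wpos unfolding generic_def admissible_def by blast
    show ?thesis
    proof (rule tendstoI)
      fix \<epsilon> :: real assume eps: "\<epsilon> > 0"
      obtain A0 where A0: "finite A0" "measure \<nu> (cyl w) - \<epsilon>/2 < (\<Sum>b\<in>A0. measure \<nu> (cyl (w @ [b])))"
        using CA[of "\<epsilon>/2" w] eps by auto
      define A where "A = {b\<in>A0. measure \<nu> (cyl (w @ [b])) > 0}"
      have fA: "finite A" using A0 by (simp add: A_def)
      have aA: "a \<notin> A" using snoc.prems by (simp add: A_def)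
      have sA: "(\<Sum>b\<in>A. measure \<nu> (cyl (w @ [b]))) = (\<Sum>b\<in>A0. measure \<nu> (cyl (w @ [b])))"
      proof -
        have "(\<Sum>b\<in>A0. measure \<nu> (cyl (w @ [b]))) = (\<Sum>b\<in>A. measure \<nu> (cyl (w @ [b])))"
          unfolding A_def
          by (rule sum.mono_neutral_right[OF A0(1)]) (auto simp: less_le)
        then show ?thesis by simp
      qed
      have gb: "(\<lambda>N. real (occ (w @ [b]) (prefix_of \<alpha> N)) / real N) \<longlonglongrightarrow> measure \<nu> (cyl (w @ [b]))"
        if "b \<in> A" for b
        using g that unfolding generic_def admissible_def A_def by blast
      have lim: "(\<lambda>N. real (occ w (prefix_of \<alpha> N)) / real N - (\<Sum>b\<in>A. real (occ (w @ [b]) (prefix_of \<alpha> N)) / real N))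
          \<longlonglongrightarrow> measure \<nu> (cyl w) - (\<Sum>b\<in>A. measure \<nu> (cyl (w @ [b])))"
        by (intro tendsto_diff gw tendsto_sum gb)
      have "eventually (\<lambda>N. real (occ w (prefix_of \<alpha> N)) / real N - (\<Sum>b\<in>A. real (occ (w @ [b]) (prefix_of \<alpha> N)) / real N) < \<epsilon>) sequentially"
      proof (rule order_tendstoD(2)[OF lim])
        show "measure \<nu> (cyl w) - (\<Sum>b\<in>A. measure \<nu> (cyl (w @ [b]))) < \<epsilon>"
          using A0(2) eps unfolding sA by linarith
      qed
      then show "eventually (\<lambda>N. dist (real (occ (w @ [a]) (prefix_of \<alpha> N)) / real N) 0 < \<epsilon>) sequentially"
      proof eventually_elim
        case (elim N)
        have "(\<Sum>b\<in>insert a A. occ (w @ [b]) (prefix_of \<alpha> N)) \<le> occ w (prefix_of \<alpha> N)"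
          by (rule occ_snoc_sum) (simp add: fA)
        then have "real (occ (w @ [a]) (prefix_of \<alpha> N)) + (\<Sum>b\<in>A. real (occ (w @ [b]) (prefix_of \<alpha> N)))
            \<le> real (occ w (prefix_of \<alpha> N))"
          using fA aA by (simp flip: of_nat_sum of_nat_add)
        then have "real (occ (w @ [a]) (prefix_of \<alpha> N)) / real N + (\<Sum>b\<in>A. real (occ (w @ [b]) (prefix_of \<alpha> N)) / real N)
            \<le> real (occ w (prefix_of \<alpha> N)) / real N"
          by (simp add: sum_divide_distrib[symmetric] add_divide_distrib[symmetric] divide_right_mono)
        then show ?case using elim by (simp add: dist_real_def)
      qed
    qed
  qed
qed

lemma gen_all:
  assumes g: "generic \<nu> \<alpha>"
  shows "(\<lambda>N. real (occ v (prefix_of \<alpha> N)) / real N) \<longlonglongrightarrow> measure \<nu> (cyl v)"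
proof (cases "measure \<nu> (cyl v) = 0")
  case True then show ?thesis using Z[OF g True] by simp
next
  case False
  then have "measure \<nu> (cyl v) > 0" using measure_nonneg[of \<nu> "cyl v"] by linarith
  then show ?thesis using g unfolding generic_def admissible_def by blast
qed

end

lemma occ_single: "occ [a] (prefix_of \<alpha> N) = card {t. t < N \<and> \<alpha> t = a}"
  by (simp add: occ_prefix win_def) (metis Suc_le_eq)

definition Pres :: "(nat \<Rightarrow> 'a) measure \<Rightarrow> bool" where
  "Pres \<nu> \<longleftrightarrow> (\<forall>Q \<delta> qs F \<alpha>. is_dfa Q \<delta> qs F \<and> generic \<nu> \<alpha> \<and> infinite (selected \<delta> qs F \<alpha>)
             \<longrightarrow> generic \<nu> (select \<delta> qs F \<alpha>))"

context nuset begin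

lemma R1:
  assumes P: "Pres \<nu>" and g: "generic \<nu> \<alpha>" and apos: "measure \<nu> (cyl [a]) > 0"
  shows "measure \<nu> (cyl (w @ [a])) = measure \<nu> (cyl w) * measure \<nu> (cyl [a])"
proof (cases "measure \<nu> (cyl w) = 0")
  case True
  then show ?thesis using meas_snoc_le[of w a] measure_nonneg[of \<nu> "cyl (w @ [a])"] by simp
next
  case False
  then have wpos: "measure \<nu> (cyl w) > 0" using measure_nonneg[of \<nu> "cyl w"] by linarith
  define Qn where "Qn = set_encode ` Pow {0..length w}"
  define \<delta>n where "\<delta>n q y = set_encode (jstep w (set_decode q) y)" for q y
  define qs where "qs = set_encode {0}"
  define Fn where "Fn = set_encode ` {J. J \<subseteq> {0..length w} \<and> length w \<in> J}"
  have finJ: "finite (Jset w v)" for v using Jset_sub[of w v] finite_subset by blast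
  have run_eq: "run \<delta>n qs \<alpha> t = set_encode (Jset w (prefix_of \<alpha> t))" for t
  proof (induct t)
    case 0 then show ?case by (simp add: qs_def prefix_of_def Jset_Nil)
  next
    case (Suc t)
    then show ?case using finJ by (simp add: \<delta>n_def prefix_of_Suc Jset_snoc)
  qed
  have inF: "run \<delta>n qs \<alpha> t \<in> Fn \<longleftrightarrow> length w \<in> Jset w (prefix_of \<alpha> t)" for t
  proof -
    have "set_encode (Jset w (prefix_of \<alpha> t)) \<in> Fn \<longleftrightarrow> Jset w (prefix_of \<alpha> t) \<in> {J. J \<subseteq> {0..length w} \<and> length w \<in> J}"
      unfolding Fn_def
      by (rule inj_on_image_mem_iff[OF inj_on_set_encode])
         (auto intro: finite_subset[of _ "{0..length w}"] simp: finJ)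
    then show ?thesis using Jset_sub[of w] by (auto simp: run_eq)
  qed
  have dfa: "is_dfa Qn \<delta>n qs Fn"
    unfolding is_dfa_def
  proof (intro conjI ballI allI)
    show "finite Qn" by (simp add: Qn_def)
    show "qs \<in> Qn" unfolding Qn_def qs_def by (intro imageI) auto
    show "Fn \<subseteq> Qn" by (auto simp: Qn_def Fn_def)
    fix q y assume "q \<in> Qn"
    then obtain J where J: "J \<subseteq> {0..length w}" "q = set_encode J" by (auto simp: Qn_def)
    then have "finite J" using finite_subset by blast
    then show "\<delta>n q y \<in> Qn" using J jstep_sub[of w J y] by (auto simp: Qn_def \<delta>n_def)
  qed
  define S where "S = selected \<delta>n qs Fn \<alpha>"
  have Sdef: "S = {t. length w \<in> Jset w (prefix_of \<alpha> t)}"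
    by (auto simp: S_def selected_def inF)
  define s where "s N = cntP (\<lambda>t. t \<in> S) N" for N
  have s_eq: "s N = card {m. m < N \<and> length w \<in> Jset w (prefix_of \<alpha> m)}" for N
    by (simp add: s_def cntP_def Sdef)
  have gw: "(\<lambda>N. real (occ w (prefix_of \<alpha> N)) / real N) \<longlonglongrightarrow> measure \<nu> (cyl w)"
    using g wpos unfolding generic_def admissible_def by blast
  have S: "infinite S"
  proof
    assume fS: "finite S"
    have b: "real (occ w (prefix_of \<alpha> N)) \<le> real (card S) + 1" for N
    proof -
      have "s N \<le> card S" unfolding s_def cntP_def by (intro card_mono fS) auto
      then show ?thesis using count_suffix_le(2)[where M=N and u=w and \<beta>=\<alpha>] s_eq[of N] by linarith
    qed
    have "(\<lambda>N. (real (card S) + 1) / real N) \<longlonglongrightarrow> 0"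
      by (rule tendsto_divide_0[OF tendsto_const]) (rule filterlim_at_top_imp_at_infinity[OF filterlim_real_sequentially])
    then have "measure \<nu> (cyl w) \<le> 0"
      by (rule LIMSEQ_le[OF gw]) (auto intro!: exI[of _ 0] divide_right_mono b)
    then show False using wpos by simp
  qed
  define \<beta> where "\<beta> = select \<delta>n qs Fn \<alpha>"
  have gb: "generic \<nu> \<beta>" using P dfa g S unfolding Pres_def \<beta>_def S_def by blast
  have \<beta>_eq: "\<beta> = \<alpha> \<circ> enumerate S" by (simp add: \<beta>_def select_def S_def)
  have fa: "(\<lambda>n. real (occ [a] (prefix_of \<beta> n)) / real n) \<longlonglongrightarrow> measure \<nu> (cyl [a])"
    using gb apos unfolding generic_def admissible_def by blast
  have occ_eq: "occ [a] (prefix_of \<beta> (s N)) = occ (w @ [a]) (prefix_of \<alpha> N)" for N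
  proof -
    have "occ [a] (prefix_of \<beta> (s N)) = card {m. m < s N \<and> (\<lambda>m y. y = a) m ((\<alpha> \<circ> enumerate S) m)}"
      by (simp add: occ_single \<beta>_eq)
    also have "\<dots> = card {t. t < N \<and> t \<in> S \<and> (\<lambda>m y. y = a) (cntP (\<lambda>t. t \<in> S) t) (\<alpha> t)}"
      unfolding s_def by (rule card_sel_transfer[OF S, symmetric])
    also have "\<dots> = card {m. m < N \<and> length w \<in> Jset w (prefix_of \<alpha> m) \<and> \<alpha> m = a}"
      by (simp add: Sdef conj_commute)
    also have "\<dots> = occ (w @ [a]) (prefix_of \<alpha> N)" by (rule count_suffix_snoc)
    finally show ?thesis .
  qed
  have h1: "(\<lambda>N. real (occ (w @ [a]) (prefix_of \<alpha> N)) / real (s N)) \<longlonglongrightarrow> measure \<nu> (cyl [a])"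
    using compose_cnt[OF fa S] unfolding s_def[symmetric] occ_eq .
  have h2: "(\<lambda>N. real (s N) / real N) \<longlonglongrightarrow> measure \<nu> (cyl w)"
  proof -
    have "(\<lambda>N. real (s N) / real N - real (occ w (prefix_of \<alpha> N)) / real N) \<longlonglongrightarrow> 0"
    proof (rule Lim_null_comparison)
      show "eventually (\<lambda>N. norm (real (s N) / real N - real (occ w (prefix_of \<alpha> N)) / real N) \<le> 1 / real N) sequentially"
      proof (intro always_eventually allI)
        fix N
        have "\<bar>real (s N) - real (occ w (prefix_of \<alpha> N))\<bar> \<le> 1"
          using count_suffix_le[where M=N and u=w and \<beta>=\<alpha>] s_eq[of N] by linarith
        then show "norm (real (s N) / real N - real (occ w (prefix_of \<alpha> N)) / real N) \<le> 1 / real N"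
          by (simp add: diff_divide_distrib[symmetric] abs_divide divide_right_mono)
      qed
      show "(\<lambda>N. 1 / real N) \<longlonglongrightarrow> 0" by (rule lim_1_over_n)
    qed
    from tendsto_add[OF this gw] show ?thesis by simp
  qed
  have eq: "real (occ (w @ [a]) (prefix_of \<alpha> N)) / real N
      = (real (occ (w @ [a]) (prefix_of \<alpha> N)) / real (s N)) * (real (s N) / real N)" for N
  proof (cases "s N = 0")
    case True
    have "occ (w @ [a]) (prefix_of \<alpha> N) \<le> s N"
      unfolding s_eq count_suffix_snoc[symmetric] by (intro card_mono) auto
    then show ?thesis using True by simp
  next
    case False then show ?thesis by simp
  qed
  have "(\<lambda>N. real (occ (w @ [a]) (prefix_of \<alpha> N)) / real N) \<longlonglongrightarrow> measure \<nu> (cyl [a]) * measure \<nu> (cyl w)"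
    unfolding eq by (rule tendsto_mult[OF h1 h2])
  moreover have "(\<lambda>N. real (occ (w @ [a]) (prefix_of \<alpha> N)) / real N) \<longlonglongrightarrow> measure \<nu> (cyl (w @ [a]))"
    by (rule gen_all[OF g])
  ultimately show ?thesis using LIMSEQ_unique by (metis mult.commute)
qed

end

lemma occ_change:
  "real (occ w (prefix_of \<alpha>' N)) \<le> real (occ w (prefix_of \<alpha> N)) + real (length w) * real (card {t. t < N \<and> \<alpha>' t \<noteq> \<alpha> t})"
proof -
  define Ds where "Ds = {t. t < N \<and> \<alpha>' t \<noteq> \<alpha> t}"
  define A' where "A' = {i. i + length w \<le> N \<and> win \<alpha>' i (length w) = w}"
  define A where "A = {i. i + length w \<le> N \<and> win \<alpha> i (length w) = w}"
  define X where "X = {i. i + length w \<le> N \<and> win \<alpha>' i (length w) \<noteq> win \<alpha> i (length w)}"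
  have fin: "finite {i. i + d \<le> N}" for d by (rule finite_subset[of _ "{..N}"]) auto
  have sub: "A' \<subseteq> A \<union> X" by (auto simp: A'_def A_def X_def)
  have X_sub: "X \<subseteq> (\<Union>d\<in>{..<length w}. {i. i + d \<in> Ds})"
  proof
    fix i assume "i \<in> X"
    then have i: "i + length w \<le> N" "map \<alpha>' [i..<i + length w] \<noteq> map \<alpha> [i..<i + length w]"
      by (auto simp: X_def win_def)
    then obtain t where t: "t \<in> set [i..<i + length w]" "\<alpha>' t \<noteq> \<alpha> t"
      unfolding map_eq_conv by blast
    then show "i \<in> (\<Union>d\<in>{..<length w}. {i. i + d \<in> Ds})"
      using i(1) by (auto simp: Ds_def intro!: bexI[of _ "t - i"])
  qed
  have fD: "finite Ds" by (simp add: Ds_def)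
  have cd: "card {i. i + d \<in> Ds} \<le> card Ds" for d
  proof -
    have "card {i. i + d \<in> Ds} = card ((\<lambda>i. i + d) ` {i. i + d \<in> Ds})"
      by (rule card_image[symmetric]) (auto simp: inj_on_def)
    also have "\<dots> \<le> card Ds" by (intro card_mono fD) auto
    finally show ?thesis .
  qed
  have fin2: "finite {i. i + d \<in> Ds}" for d
    by (rule finite_subset[of _ "{..<N}"]) (auto simp: Ds_def)
  have "card X \<le> card (\<Union>d\<in>{..<length w}. {i. i + d \<in> Ds})"
    by (intro card_mono X_sub) (auto simp: fin2)
  also have "\<dots> \<le> (\<Sum>d\<in>{..<length w}. card {i. i + d \<in> Ds})" by (rule card_UN_le) simp
  also have "\<dots> \<le> (\<Sum>d\<in>{..<length w}. card Ds)" by (intro sum_mono cd)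
  finally have cX: "card X \<le> length w * card Ds" by simp
  have "card A' \<le> card (A \<union> X)"
    by (intro card_mono sub) (auto simp: A_def X_def intro: finite_subset[OF _ fin])
  also have "\<dots> \<le> card A + card X" by (rule card_Un_le)
  finally have "card A' \<le> card A + length w * card Ds" using cX by linarith
  then have "real (card A') \<le> real (card A) + real (length w) * real (card Ds)"
    by (metis of_nat_add of_nat_le_iff of_nat_mult)
  then show ?thesis by (simp add: occ_prefix A'_def A_def Ds_def)
qed

lemma card_squares: "real (card {k::nat. k * k < N}) \<le> sqrt (real N) + 1"
proof -
  have "{k::nat. k * k < N} \<subseteq> {..nat \<lfloor>sqrt (real N)\<rfloor>}"
  proof
    fix k assume "k \<in> {k::nat. k * k < N}"
    then have "real k ^ 2 \<le> real N" by (simp add: power2_eq_square flip: of_nat_mult)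
    then have "real k \<le> sqrt (real N)" by (rule real_le_rsqrt)
    then show "k \<in> {..nat \<lfloor>sqrt (real N)\<rfloor>}" by (simp add: le_nat_floor)
  qed
  then have "card {k::nat. k * k < N} \<le> card {..nat \<lfloor>sqrt (real N)\<rfloor>}" by (intro card_mono) auto
  then have c: "card {k::nat. k * k < N} \<le> Suc (nat \<lfloor>sqrt (real N)\<rfloor>)" by simp
  have f0: "0 \<le> \<lfloor>sqrt (real N)\<rfloor>" by simp
  have "real (Suc (nat \<lfloor>sqrt (real N)\<rfloor>)) = real_of_int \<lfloor>sqrt (real N)\<rfloor> + 1"
    using f0 by simp
  also have "\<dots> \<le> sqrt (real N) + 1" by simp
  finally show ?thesis using c by (meson of_nat_le_iff order_trans)
qed

definition Sp :: "nat set" where "Sp = {t. \<exists>k\<ge>2. t = k * k \<or> t = k * k + 1}"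

lemma card_Sp: "real (card {t. t < N \<and> t \<in> Sp}) \<le> 2 * sqrt (real N) + 2"
proof -
  define K where "K = {k::nat. k * k < N}"
  have fK: "finite K" unfolding K_def by (rule finite_subset[of _ "{..N}"]) (auto, metis le_square less_imp_le_nat order.trans)
  have "{t. t < N \<and> t \<in> Sp} \<subseteq> (\<lambda>k. k * k) ` K \<union> (\<lambda>k. k * k + 1) ` K"
    by (auto simp: Sp_def K_def)
  then have "card {t. t < N \<and> t \<in> Sp} \<le> card ((\<lambda>k. k * k) ` K \<union> (\<lambda>k. k * k + 1) ` K)"
    by (intro card_mono) (auto simp: fK)
  also have "\<dots> \<le> card ((\<lambda>k. k * k) ` K) + card ((\<lambda>k. k * k + 1) ` K)" by (rule card_Un_le)
  also have "\<dots> \<le> card K + card K" by (intro add_mono card_image_le fK)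
  finally have "real (card {t. t < N \<and> t \<in> Sp}) \<le> 2 * real (card K)" by simp
  then show ?thesis using card_squares[of N] by (simp add: K_def)
qed

lemma Sp_lim: "(\<lambda>N. real (card {t. t < N \<and> t \<in> Sp}) / real N) \<longlonglongrightarrow> 0"
proof (rule Lim_null_comparison)
  show "eventually (\<lambda>N. norm (real (card {t. t < N \<and> t \<in> Sp}) / real N) \<le> (2 * sqrt (real N) + 2) / real N) sequentially"
    using card_Sp by (intro always_eventually allI) (simp add: divide_right_mono)
  show "(\<lambda>N. (2 * sqrt (real N) + 2) / real N) \<longlonglongrightarrow> 0" by real_asymp
qed

lemma enum_next:
  fixes S :: "nat set"
  assumes S: "infinite S" and s: "s \<in> S" and lt: "enumerate S m < s"
  shows "enumerate S (Suc m) \<le> s"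
proof (rule ccontr)
  assume "\<not> enumerate S (Suc m) \<le> s"
  then have gt: "s < enumerate S (Suc m)" by simp
  obtain j where j: "enumerate S j = s" using enumerate_Ex[OF S s] by blast
  have "m < j" using lt j enumerate_mono_iff[OF S] by metis
  moreover have "j < Suc m" using gt j enumerate_mono_iff[OF S] by metis
  ultimately show False by simp
qed

context nuset begin

lemma exists_pos_letter: "\<exists>c. measure \<nu> (cyl [c]) > 0"
proof -
  obtain A where A: "finite A" "measure \<nu> (cyl []) - 1/2 < (\<Sum>b\<in>A. measure \<nu> (cyl ([] @ [b])))"
    using CA[of "1/2" "[]"] by auto
  then have "0 < (\<Sum>b\<in>A. measure \<nu> (cyl [b]))" using meas_Nil by simp
  moreover have "\<exists>c\<in>A. measure \<nu> (cyl [c]) \<noteq> 0"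
  proof (rule ccontr)
    assume "\<not> (\<exists>c\<in>A. measure \<nu> (cyl [c]) \<noteq> 0)"
    then have "(\<Sum>b\<in>A. measure \<nu> (cyl [b])) = 0" by (intro sum.neutral) auto
    then show False using calculation by simp
  qed
  then obtain c where "measure \<nu> (cyl [c]) \<noteq> 0" by blast
  then show ?thesis using measure_nonneg[of \<nu> "cyl [c]"] by (intro exI[of _ c]) linarith
qed

lemma R2:
  assumes P: "Pres \<nu>" and g: "generic \<nu> \<alpha>" and b0: "measure \<nu> (cyl [b]) = 0"
  shows False
proof -
  obtain c where cpos: "measure \<nu> (cyl [c]) > 0" using exists_pos_letter by blast
  have cb: "c \<noteq> b" using cpos b0 by auto
  have cc: "measure \<nu> (cyl [c, c]) > 0"
    using R1[OF P g cpos, of "[c]"] cpos by simp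
  define \<alpha>1 where "\<alpha>1 t = (if t \<in> Sp then b else if \<alpha> t = b then c else \<alpha> t)" for t
  have \<alpha>1b: "\<alpha>1 t = b \<longleftrightarrow> t \<in> Sp" for t using cb by (simp add: \<alpha>1_def)
  define D where "D N = card {t. t < N \<and> \<alpha>1 t \<noteq> \<alpha> t}" for N
  have Dlim: "(\<lambda>N. real (D N) / real N) \<longlonglongrightarrow> 0"
  proof (rule Lim_null_comparison)
    show "eventually (\<lambda>N. norm (real (D N) / real N)
        \<le> real (card {t. t < N \<and> t \<in> Sp}) / real N + real (occ [b] (prefix_of \<alpha> N)) / real N) sequentially"
    proof (intro always_eventually allI)
      fix N
      have "{t. t < N \<and> \<alpha>1 t \<noteq> \<alpha> t} \<subseteq> {t. t < N \<and> t \<in> Sp} \<union> {t. t < N \<and> \<alpha> t = b}"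
        by (auto simp: \<alpha>1_def)
      then have "D N \<le> card ({t. t < N \<and> t \<in> Sp} \<union> {t. t < N \<and> \<alpha> t = b})"
        unfolding D_def by (intro card_mono) auto
      also have "\<dots> \<le> card {t. t < N \<and> t \<in> Sp} + card {t. t < N \<and> \<alpha> t = b}" by (rule card_Un_le)
      finally have "real (D N) \<le> real (card {t. t < N \<and> t \<in> Sp}) + real (occ [b] (prefix_of \<alpha> N))"
        by (simp add: occ_single)
      then show "norm (real (D N) / real N)
          \<le> real (card {t. t < N \<and> t \<in> Sp}) / real N + real (occ [b] (prefix_of \<alpha> N)) / real N"
        by (simp add: add_divide_distrib[symmetric] divide_right_mono)
    qed
    show "(\<lambda>N. real (card {t. t < N \<and> t \<in> Sp}) / real N + real (occ [b] (prefix_of \<alpha> N)) / real N) \<longlonglongrightarrow> 0"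
      using tendsto_add[OF Sp_lim Z[OF g b0]] by simp
  qed
  have g1: "generic \<nu> \<alpha>1"
    unfolding generic_def
  proof (intro allI impI)
    fix w assume "admissible \<nu> w"
    have gw: "(\<lambda>N. real (occ w (prefix_of \<alpha> N)) / real N) \<longlonglongrightarrow> measure \<nu> (cyl w)"
      by (rule gen_all[OF g])
    have "(\<lambda>N. real (occ w (prefix_of \<alpha>1 N)) / real N - real (occ w (prefix_of \<alpha> N)) / real N) \<longlonglongrightarrow> 0"
    proof (rule Lim_null_comparison)
      show "eventually (\<lambda>N. norm (real (occ w (prefix_of \<alpha>1 N)) / real N - real (occ w (prefix_of \<alpha> N)) / real N)
          \<le> real (length w) * (real (D N) / real N)) sequentially"
      proof (intro always_eventually allI)
        fix N
        have e: "{t. t < N \<and> \<alpha> t \<noteq> \<alpha>1 t} = {t. t < N \<and> \<alpha>1 t \<noteq> \<alpha> t}" by auto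
        have "\<bar>real (occ w (prefix_of \<alpha>1 N)) - real (occ w (prefix_of \<alpha> N))\<bar> \<le> real (length w) * real (D N)"
          using occ_change[of w \<alpha>1 N \<alpha>] occ_change[of w \<alpha> N \<alpha>1] unfolding e D_def by linarith
        then have "\<bar>real (occ w (prefix_of \<alpha>1 N)) - real (occ w (prefix_of \<alpha> N))\<bar> / real N
            \<le> real (length w) * real (D N) / real N"
          by (rule divide_right_mono) simp
        moreover have "norm (real (occ w (prefix_of \<alpha>1 N)) / real N - real (occ w (prefix_of \<alpha> N)) / real N)
            = \<bar>real (occ w (prefix_of \<alpha>1 N)) - real (occ w (prefix_of \<alpha> N))\<bar> / real N"
          by (simp add: diff_divide_distrib[symmetric] abs_divide)
        ultimately show "norm (real (occ w (prefix_of \<alpha>1 N)) / real N - real (occ w (prefix_of \<alpha> N)) / real N)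
          \<le> real (length w) * (real (D N) / real N)"
          by simp
      qed
      show "(\<lambda>N. real (length w) * (real (D N) / real N)) \<longlonglongrightarrow> 0"
        using tendsto_mult[OF tendsto_const Dlim, of "real (length w)"] by simp
    qed
    from tendsto_add[OF this gw]
    show "(\<lambda>N. real (occ w (prefix_of \<alpha>1 N)) / real N) \<longlonglongrightarrow> measure \<nu> (cyl w)" by simp
  qed
  define \<delta> :: "nat \<Rightarrow> 'a \<Rightarrow> nat" where "\<delta> q y = (if y = b then 1 else 0)" for q y
  have dfa: "is_dfa {0, 1} \<delta> 0 {1}" by (simp add: is_dfa_def \<delta>_def)
  have run_eq: "run \<delta> 0 \<alpha>1 t = (if t = 0 then 0 else if \<alpha>1 (t - 1) = b then 1 else 0)" for t
    by (induct t) (auto simp: \<delta>_def)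
  define S where "S = selected \<delta> 0 {1} \<alpha>1"
  have Siff: "t \<in> S \<longleftrightarrow> (\<exists>k\<ge>2. t = k * k + 1 \<or> t = k * k + 2)" for t
  proof -
    have "t \<in> S \<longleftrightarrow> t \<noteq> 0 \<and> t - 1 \<in> Sp"
      by (simp add: S_def selected_def run_eq \<alpha>1b)
    also have "\<dots> \<longleftrightarrow> (\<exists>k\<ge>2. t = k * k + 1 \<or> t = k * k + 2)"
      unfolding Sp_def by (cases t) auto
    finally show ?thesis .
  qed
  have S: "infinite S"
    unfolding infinite_nat_iff_unbounded
  proof
    fix m
    have "(m + 2) * (m + 2) + 1 \<in> S" unfolding Siff by (intro exI[of _ "m + 2"]) simp
    moreover have "m < (m + 2) * (m + 2) + 1" by simp
    ultimately show "\<exists>t>m. t \<in> S" by blast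
  qed
  define \<beta> where "\<beta> = select \<delta> 0 {1} \<alpha>1"
  have gb: "generic \<nu> \<beta>" using P dfa g1 S unfolding Pres_def \<beta>_def S_def by blast
  have \<beta>_eq: "\<beta> m = \<alpha>1 (enumerate S m)" for m by (simp add: \<beta>_def select_def S_def)
  have alt: "\<beta> m = b \<or> \<beta> (Suc m) = b" for m
  proof -
    have tS: "enumerate S m \<in> S" by (rule enumerate_in_set[OF S])
    then obtain k where k: "k \<ge> 2" "enumerate S m = k * k + 1 \<or> enumerate S m = k * k + 2"
      using Siff by blast
    show ?thesis
    proof (cases "enumerate S m = k * k + 1")
      case True
      then have "enumerate S m \<in> Sp" using k unfolding Sp_def by blast
      then show ?thesis using \<beta>_eq \<alpha>1b by simp
    next
      case False
      then have t: "enumerate S m = k * k + 2" using k by simp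
      define t' where "t' = enumerate S (Suc m)"
      have t'S: "t' \<in> S" unfolding t'_def by (rule enumerate_in_set[OF S])
      have tt': "enumerate S m < t'" unfolding t'_def using S by simp
      have nxt: "(k + 1) * (k + 1) + 1 \<in> S" unfolding Siff using k by (intro exI[of _ "k + 1"]) simp
      have kk: "k * k + 2 < (k + 1) * (k + 1) + 1" using k by simp
      have le: "t' \<le> (k + 1) * (k + 1) + 1"
        unfolding t'_def by (rule enum_next[OF S nxt]) (use t kk in simp)
      have ge: "(k + 1) * (k + 1) + 1 \<le> t'"
      proof -
        obtain j where j: "j \<ge> 2" "t' = j * j + 1 \<or> t' = j * j + 2" using Siff t'S by blast
        have "k < j"
        proof (rule ccontr)
          assume "\<not> k < j"
          then have "j * j \<le> k * k" by (simp add: mult_le_mono)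
          then show False using j tt' t by auto
        qed
        then have "(k + 1) * (k + 1) \<le> j * j" using mult_le_mono[of "k + 1" j "k + 1" j] by simp
        then show ?thesis using j by auto
      qed
      have "t' = (k + 1) * (k + 1) + 1" using le ge by simp
      moreover have "(k + 1) * (k + 1) + 1 \<in> Sp" unfolding Sp_def using k
        by (intro CollectI exI[of _ "k + 1"]) auto
      ultimately show ?thesis using \<beta>_eq[of "Suc m"] \<alpha>1b unfolding t'_def by simp
    qed
  qed
  have occ0: "occ [c, c] (prefix_of \<beta> n) = 0" for n
  proof -
    have E: "{i. i + length [c, c] \<le> n \<and> win \<beta> i (length [c, c]) = [c, c]} = {}"
    proof -
      have "False" if "win \<beta> i 2 = [c, c]" for i
      proof -
        have "win \<beta> i 2 = [\<beta> i, \<beta> (Suc i)]" by (simp add: win_def upt_rec)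
        then have "\<beta> i = c" "\<beta> (Suc i) = c" using that by auto
        then show False using alt[of i] cb by auto
      qed
      then show ?thesis by (auto simp: numeral_2_eq_2)
    qed
    show ?thesis unfolding occ_prefix E by simp
  qed
  have "(\<lambda>n. real (occ [c, c] (prefix_of \<beta> n)) / real n) \<longlonglongrightarrow> measure \<nu> (cyl [c, c])"
    using gb cc unfolding generic_def admissible_def by blast
  then have "(\<lambda>n. 0::real) \<longlonglongrightarrow> measure \<nu> (cyl [c, c])" by (simp add: occ0)
  then have "measure \<nu> (cyl [c, c]) = 0" using LIMSEQ_unique tendsto_const by blast
  then show False using cc by simp
qed

end

context nuset begin

lemma letter_has_sum: "((\<lambda>a. measure \<nu> (cyl [a])) has_sum 1) UNIV"
  unfolding has_sum_def
proof (rule tendstoI)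
  fix \<epsilon> :: real assume eps: "\<epsilon> > 0"
  obtain A where A: "finite A" "measure \<nu> (cyl []) - \<epsilon> < (\<Sum>b\<in>A. measure \<nu> (cyl ([] @ [b])))"
    using CA[OF eps, of "[]"] by auto
  show "eventually (\<lambda>F. dist (\<Sum>a\<in>F. measure \<nu> (cyl [a])) 1 < \<epsilon>) (finite_subsets_at_top UNIV)"
    unfolding eventually_finite_subsets_at_top
  proof (intro exI[of _ A] conjI allI impI)
    show "finite A" by (rule A(1))
    show "A \<subseteq> UNIV" by simp
    fix Y assume Y: "finite Y \<and> A \<subseteq> Y \<and> Y \<subseteq> UNIV"
    have "(\<Sum>b\<in>A. measure \<nu> (cyl [b])) \<le> (\<Sum>b\<in>Y. measure \<nu> (cyl [b]))"
      using Y by (intro sum_mono2) auto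
    moreover have "(\<Sum>b\<in>Y. measure \<nu> (cyl ([] @ [b]))) \<le> measure \<nu> (cyl [])"
      using Y by (intro sum_ext_le) auto
    ultimately show "dist (\<Sum>a\<in>Y. measure \<nu> (cyl [a])) 1 < \<epsilon>"
      using A(2) meas_Nil by (simp add: dist_real_def)
  qed
qed

lemma backward:
  assumes P: "Pres \<nu>" and g: "generic \<nu> \<alpha>"
  shows "bernoulli_measure \<nu> \<and> (\<forall>w. admissible \<nu> w)"
proof -
  define p where "p a = measure \<nu> (cyl [a])" for a
  have ppos: "0 < p a" for a
  proof (rule ccontr)
    assume "\<not> 0 < p a"
    then have "measure \<nu> (cyl [a]) = 0" using measure_nonneg[of \<nu> "cyl [a]"] by (simp add: p_def)
    then show False by (rule R2[OF P g])
  qed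
  have prod: "measure \<nu> (cyl w) = prod_list (map p w)" for w
  proof (induct w rule: rev_induct)
    case Nil then show ?case using meas_Nil by simp
  next
    case (snoc a w)
    have "measure \<nu> (cyl (w @ [a])) = measure \<nu> (cyl w) * measure \<nu> (cyl [a])"
      by (rule R1[OF P g]) (use ppos in \<open>simp add: p_def\<close>)
    then show ?case using snoc by (simp add: p_def)
  qed
  have "bernoulli_measure \<nu>"
    unfolding bernoulli_measure_def
  proof (intro exI[of _ p] conjI allI)
    fix a
    show "0 \<le> p a" using ppos[of a] by simp
    show "p a \<le> 1" unfolding p_def by (rule meas_le1)
  next
    show "(p has_sum 1) UNIV" unfolding p_def by (rule letter_has_sum)
  next
    fix w show "measure \<nu> (cyl w) = prod_list (map p w)" by (rule prod)
  qed
  moreover have "admissible \<nu> w" for w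
    unfolding admissible_def prod using prod_pos[of p w] ppos by blast
  ultimately show ?thesis by blast
qed

end

theorem theorem6p3:
  fixes \<nu> :: "(nat \<Rightarrow> 'a::countable) measure"
  assumes "prob_space \<nu>"
    and "cylinder_measure \<nu>"
    and "shift_invariant \<nu>"
    and "\<exists>\<alpha>. generic \<nu> \<alpha>"
  shows "(\<forall>Q \<delta> qs F \<alpha>. is_dfa Q \<delta> qs F \<and> generic \<nu> \<alpha> \<and> infinite (selected \<delta> qs F \<alpha>)
             \<longrightarrow> generic \<nu> (select \<delta> qs F \<alpha>))
         \<longleftrightarrow> (bernoulli_measure \<nu> \<and> (\<forall>w. admissible \<nu> w))"
proof
  assume P: "\<forall>Q \<delta> qs F \<alpha>. is_dfa Q \<delta> qs F \<and> generic \<nu> \<alpha> \<and> infinite (selected \<delta> qs F \<alpha>)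
             \<longrightarrow> generic \<nu> (select \<delta> qs F \<alpha>)"
  interpret nuset \<nu> by (rule nuset.intro[OF assms(1,2)])
  obtain \<alpha> where g: "generic \<nu> \<alpha>" using assms(4) by blast
  show "bernoulli_measure \<nu> \<and> (\<forall>w. admissible \<nu> w)"
    by (rule backward[OF _ g]) (use P in \<open>simp add: Pres_def\<close>)
next
  assume "bernoulli_measure \<nu> \<and> (\<forall>w. admissible \<nu> w)"
  then show "\<forall>Q \<delta> qs F \<alpha>. is_dfa Q \<delta> qs F \<and> generic \<nu> \<alpha> \<and> infinite (selected \<delta> qs F \<alpha>)
             \<longrightarrow> generic \<nu> (select \<delta> qs F \<alpha>)"
    using forward by blast
qed

end
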